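(* Let $K\ge2$, let $\mathbf{p}$ be a probability vector on $[K]$ with all $p_k>0$, and let $\mathbf{W},\mathbf{W}'$ be $K\times K$ invertible row-stochastic matrices. Fix a projection map $\mathrm{Proj}_{\mathbb{P}}$ as in the context, and let $\mathscr{L}^{(n)}$ denote any one of the three loss metrics defined in the context. Assume that (1) in the case of the $f$-divergence loss, $f$ is strictly convex at $x=1$; (2) $\mathbf{W}'$ is not a permutation matrix. Then for all sufficiently large $n$, $$\mathscr{L}^{(n)}(\mathbf{p},\mathbf{W}\mathbf{W}')>\mathscr{L}^{(n)}(\mathbf{p},\mathbf{W}).$$
   Context: For a $K\times K$ invertible row-stochastic channel $\mathbf{V}$: $X_1,\dots,X_n$ are i.i.d. with law $\mathbf{p}$, each passed independently through $\mathbf{V}$ ($\Pr\{Y_i=\ell\mid X_i=k\}=V_{k,\ell}$), giving $\mathbf{y}_n$ with empirical distribution $\mathbf{t}(\mathbf{y}_n)$; the estimator is $\hat{\mathbf{p}}_n=\mathrm{Proj}_{\mathbb{P}}(\mathbf{t}(\mathbf{y}_n)\mathbf{V}^{-1})$, where $\mathbb{P}$ is the probability simplex and $\mathrm{Proj}_{\mathbb{P}}$ maps vectors with entries summing to one into $\mathbb{P}$ with $\mathrm{Proj}_{\mathbb{P}}(\mathbf{v})=\mathbf{v}$ for $\mathbf{v}\in\mathbb{P}$. The losses are $\mathscr{L}^{(n)}_{f\text{-DIV}}(\mathbf{p},\mathbf{V})=\mathbb{E}[\sum_k p_kf(\hat p_{n,k}/p_k)]$ for a convex $f$ with $f(1)=0$;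 $\mathscr{L}^{(n)}_{\rm MSE}(\mathbf{p},\mathbf{V})=\mathbb{E}\Vert\hat{\mathbf{p}}_n-\mathbf{p}\Vert_2^2$; $\mathscr{L}^{(n)}_{\rm TV}(\mathbf{p},\mathbf{V})=\mathbb{E}\Vert\hat{\mathbf{p}}_n-\mathbf{p}\Vert_1$. The theorem compares $\mathbf{V}=\mathbf{W}$ with $\mathbf{V}=\mathbf{W}\mathbf{W}'$ (the latter equivalent to passing the outputs of $\mathbf{W}$ through $\mathbf{W}'$). "$f$ strictly convex at $1$" means $f(\lambda(1-\epsilon)+(1-\lambda)(1+\epsilon'))<\lambda f(1-\epsilon)+(1-\lambda)f(1+\epsilon')$ for all $\epsilon,\epsilon'>0$ and $\lambda\in(0,1)$. *)

theory Defs
  imports "HOL-Analysis.Analysis"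
begin

definition prob_simplex :: "(real ^ 'k::finite) set" where
  "prob_simplex = {v. (\<forall>k. 0 \<le> v $ k) \<and> (\<Sum>k\<in>UNIV. v $ k) = 1}"

definition row_stochastic :: "real ^ 'k::finite ^ 'k \<Rightarrow> bool" where
  "row_stochastic V \<longleftrightarrow> (\<forall>i j. 0 \<le> V $ i $ j) \<and> (\<forall>i. (\<Sum>j\<in>UNIV. V $ i $ j) = 1)"

definition permutation_matrix :: "real ^ 'k::finite ^ 'k \<Rightarrow> bool" where
  "permutation_matrix M \<longleftrightarrow>
     (\<exists>\<sigma>. \<sigma> permutes (UNIV :: 'k set) \<and> M = (\<chi> i j. if \<sigma> i = j then 1 else 0))"

definition is_simplex_proj :: "(real ^ 'k::finite \<Rightarrow> real ^ 'k) \<Rightarrow> bool" where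
  "is_simplex_proj Proj \<longleftrightarrow>
     (\<forall>v. (\<Sum>k\<in>UNIV. v $ k) = 1 \<longrightarrow> Proj v \<in> prob_simplex) \<and>
     (\<forall>v\<in>prob_simplex. Proj v = v)"

text \<open>Strict convexity at 1 (with 1 - eps kept in the domain [0,inf) of f).\<close>
definition strictly_convex_at_one :: "(real \<Rightarrow> real) \<Rightarrow> bool" where
  "strictly_convex_at_one f \<longleftrightarrow>
     (\<forall>e e' l. 0 < e \<and> e \<le> 1 \<and> 0 < e' \<and> 0 < l \<and> l < 1 \<longrightarrow>
        f (l * (1 - e) + (1 - l) * (1 + e')) < l * f (1 - e) + (1 - l) * f (1 + e'))"

definition empirical :: "'k::finite list \<Rightarrow> real ^ 'k" where
  "empirical ys = (\<chi> l. real (count_list ys l) / real (length ys))"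

text \<open>Probability of the output sequence ys when X_i ~ p i.i.d. passed through V:
  the Y_i are i.i.d. with law p V.\<close>
definition seq_prob :: "real ^ 'k::finite \<Rightarrow> real ^ 'k ^ 'k \<Rightarrow> 'k list \<Rightarrow> real" where
  "seq_prob p V ys = prod_list (map (\<lambda>y. (p v* V) $ y) ys)"

definition estimator :: "(real ^ 'k::finite \<Rightarrow> real ^ 'k) \<Rightarrow> real ^ 'k ^ 'k \<Rightarrow> 'k list \<Rightarrow> real ^ 'k" where
  "estimator Proj V ys = Proj (empirical ys v* matrix_inv V)"

definition expected_loss ::
  "(real ^ 'k::finite \<Rightarrow> real ^ 'k) \<Rightarrow> (real ^ 'k \<Rightarrow> real ^ 'k \<Rightarrow> real) \<Rightarrow> nat
     \<Rightarrow> real ^ 'k \<Rightarrow> real ^ 'k ^ 'k \<Rightarrow> real" where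
  "expected_loss Proj g n p V =
     (\<Sum>ys\<in>{ys :: 'k list. length ys = n}. seq_prob p V ys * g (estimator Proj V ys) p)"

definition fdiv_loss :: "(real \<Rightarrow> real) \<Rightarrow> real ^ 'k::finite \<Rightarrow> real ^ 'k \<Rightarrow> real" where
  "fdiv_loss f q p = (\<Sum>k\<in>UNIV. p $ k * f (q $ k / p $ k))"

definition mse_loss :: "real ^ 'k::finite \<Rightarrow> real ^ 'k \<Rightarrow> real" where
  "mse_loss q p = (\<Sum>k\<in>UNIV. (q $ k - p $ k)^2)"

definition tv_loss :: "real ^ 'k::finite \<Rightarrow> real ^ 'k \<Rightarrow> real" where
  "tv_loss q p = (\<Sum>k\<in>UNIV. \<bar>q $ k - p $ k\<bar>)"

end

theory Submission
  imports Defs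
begin

lemma subgrad:
  fixes h :: "real \<Rightarrow> real"
  assumes cv: "convex_on I h" and m: "m \<in> I" and u: "u \<in> I" "u < m" and v: "v \<in> I" "m < v"
  shows "\<exists>s. \<forall>x\<in>I. h m + s * (x - m) \<le> h x"
proof -
  define S where "S = (\<lambda>x. (h m - h x)/(m - x)) ` {x\<in>I. x < m}"
  have ne: "S \<noteq> {}" using u by (auto simp: S_def)
  have slope: "(h m - h x)/(m - x) \<le> (h y - h m)/(y - m)" if "x\<in>I" "y\<in>I" "x<m" "m<y" for x y
  proof -
    have "(h x - h m)/(x - m) \<le> (h x - h y)/(x - y)" "(h x - h y)/(x - y) \<le> (h m - h y)/(m - y)"
      using convex_on_slope_le[OF cv that(1) that(2), of m] that by auto
    moreover have "(h x - h m)/(x - m) = (h m - h x)/(m - x)"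
      by (metis minus_diff_eq minus_divide_divide)
    moreover have "(h m - h y)/(m - y) = (h y - h m)/(y - m)"
      by (metis minus_diff_eq minus_divide_divide)
    ultimately show ?thesis by linarith
  qed
  have bdd: "bdd_above S" using slope v unfolding S_def bdd_above_def by auto
  define s where "s = Sup S"
  show ?thesis
  proof (intro exI ballI)
    fix x assume x: "x \<in> I"
    consider "x < m" | "x = m" | "x > m" by linarith
    then show "h m + s * (x - m) \<le> h x"
    proof cases
      case 1
      have "(h m - h x)/(m - x) \<le> s" unfolding s_def
        by (rule cSup_upper[OF _ bdd]) (use x 1 in \<open>auto simp: S_def\<close>)
      then have "h m - h x \<le> s * (m - x)" using 1 by (simp add: divide_le_eq)
      then show ?thesis by (simp add: algebra_simps)
    next
      case 2 then show ?thesis by simp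
    next
      case 3
      have "s \<le> (h x - h m)/(x - m)" unfolding s_def
        by (rule cSup_least[OF ne]) (use x 3 slope in \<open>auto simp: S_def\<close>)
      then have "s * (x - m) \<le> h x - h m" using 3 by (simp add: le_divide_eq)
      then show ?thesis by (simp add: algebra_simps)
    qed
  qed
qed

lemma convex_ext:
  fixes h :: "real \<Rightarrow> real"
  assumes cv: "convex_on {0..} h" and b: "\<beta> > 0"
  shows "\<exists>\<psi>. convex_on UNIV \<psi> \<and> (\<forall>x\<ge>\<beta>. \<psi> x = h x)"
proof -
  obtain s where s: "\<forall>x\<in>{0..}. h \<beta> + s * (x - \<beta>) \<le> h x"
    using subgrad[OF cv, of \<beta> 0 "\<beta>+1"] b by auto
  define \<phi> where "\<phi> x = h x - (h \<beta> + s * (x - \<beta>))" for x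
  have phi0: "\<phi> x \<ge> 0" if "x \<ge> 0" for x using s that by (auto simp: \<phi>_def)
  have phib: "\<phi> \<beta> = 0" by (simp add: \<phi>_def)
  have phicv: "\<phi> ((1-t)*x + t*y) \<le> (1-t) * \<phi> x + t * \<phi> y" if "x \<ge> 0" "y \<ge> 0" "0 \<le> t" "t \<le> 1" for x y t
  proof -
    have "h ((1-t)*x + t*y) \<le> (1-t) * h x + t * h y"
      using convex_onD[OF cv, of t x y] that by auto
    then show ?thesis by (simp add: \<phi>_def algebra_simps)
  qed
  have mono: "\<phi> z \<le> \<phi> z'" if "\<beta> \<le> z" "z \<le> z'" for z z'
  proof (cases "z' = \<beta>")
    case True then show ?thesis using that by simp
  next
    case False
    then have zb: "z' > \<beta>" using that by simp
    define th where "th = (z - \<beta>)/(z' - \<beta>)"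
    have th: "0 \<le> th" "th \<le> 1" using that zb by (auto simp: th_def divide_simps)
    have nz: "z' - \<beta> \<noteq> 0" using zb by simp
    have e: "th * (z' - \<beta>) = z - \<beta>" using nz by (simp add: th_def)
    have "z = (1-th)*\<beta> + th*z'" using e by (simp add: algebra_simps)
    then have "\<phi> z \<le> (1-th)*\<phi> \<beta> + th*\<phi> z'" using phicv[of \<beta> z' th] th b zb by simp
    also have "\<dots> = th * \<phi> z'" using phib by simp
    also have "\<dots> \<le> \<phi> z'" using th phi0[of z'] zb b by (simp add: mult_left_le_one_le)
    finally show ?thesis .
  qed
  define \<psi> where "\<psi> x = \<phi> (max x \<beta>) + (h \<beta> + s * (x - \<beta>))" for x
  have "convex_on UNIV \<psi>"
  proof (rule convex_onI)
    fix t x y :: real assume t: "0 < t" "t < 1"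
    have "max ((1-t)*x + t*y) \<beta> \<le> (1-t) * max x \<beta> + t * max y \<beta>"
    proof -
      have "(1-t)*x + t*y \<le> (1-t) * max x \<beta> + t * max y \<beta>"
        using t by (intro add_mono mult_left_mono) auto
      moreover have "\<beta> \<le> (1-t) * max x \<beta> + t * max y \<beta>"
      proof -
        have "(1-t)*\<beta> + t*\<beta> \<le> (1-t) * max x \<beta> + t * max y \<beta>"
          using t by (intro add_mono mult_left_mono) auto
        then show ?thesis by (simp add: algebra_simps)
      qed
      ultimately show ?thesis by simp
    qed
    then have "\<phi> (max ((1-t)*x + t*y) \<beta>) \<le> \<phi> ((1-t) * max x \<beta> + t * max y \<beta>)"
      by (intro mono) auto
    also have "\<dots> \<le> (1-t) * \<phi> (max x \<beta>) + t * \<phi> (max y \<beta>)"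
      using t b by (intro phicv) auto
    finally show "\<psi> ((1 - t) *\<^sub>R x + t *\<^sub>R y) \<le> (1 - t) * \<psi> x + t * \<psi> y"
      by (simp add: \<psi>_def algebra_simps)
  qed simp
  moreover have "\<forall>x\<ge>\<beta>. \<psi> x = h x" by (auto simp: \<psi>_def \<phi>_def max_def)
  ultimately show ?thesis by blast
qed

text \<open>Concavity of the Jensen defect along a segment.\<close>
definition Jdef :: "(real \<Rightarrow> real) \<Rightarrow> real \<Rightarrow> real \<Rightarrow> real \<Rightarrow> real" where
  "Jdef \<psi> a b m = ((b - m) * \<psi> a + (m - a) * \<psi> b) / (b - a) - \<psi> m"

lemma Jdef_min:
  assumes cv: "convex_on UNIV \<psi>" and "a < b" and "m1 \<le> m" "m \<le> m2" "m1 < m2"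
  shows "Jdef \<psi> a b m \<ge> min (Jdef \<psi> a b m1) (Jdef \<psi> a b m2)"
proof -
  define th where "th = (m - m1)/(m2 - m1)"
  have th: "0 \<le> th" "th \<le> 1" using assms by (auto simp: th_def divide_simps)
  have nz: "m2 - m1 \<noteq> 0" using assms by simp
  have e: "th * (m2 - m1) = m - m1" using nz by (simp add: th_def)
  have mm: "m = (1-th)*m1 + th*m2" using e by (simp add: algebra_simps)
  have c: "\<psi> m \<le> (1-th) * \<psi> m1 + th * \<psi> m2"
    using convex_onD[OF cv, of th m1 m2] th mm by simp
  have "Jdef \<psi> a b m \<ge> (1-th) * Jdef \<psi> a b m1 + th * Jdef \<psi> a b m2"
  proof -
    have N: "(b - m) * \<psi> a + (m - a) * \<psi> b = (1-th) * ((b - m1) * \<psi> a + (m1 - a) * \<psi> b) + th * ((b - m2) * \<psi> a + (m2 - a) * \<psi> b)"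
      unfolding mm by (simp add: algebra_simps)
    have "((b - m) * \<psi> a + (m - a) * \<psi> b) / (b - a)
        = (1-th) * (((b - m1) * \<psi> a + (m1 - a) * \<psi> b) / (b - a)) + th * (((b - m2) * \<psi> a + (m2 - a) * \<psi> b) / (b - a))"
      unfolding N by (simp add: add_divide_distrib distrib_left)
    then show ?thesis using c unfolding Jdef_def by (simp add: algebra_simps)
  qed
  moreover have "(1-th) * Jdef \<psi> a b m1 + th * Jdef \<psi> a b m2 \<ge> min (Jdef \<psi> a b m1) (Jdef \<psi> a b m2)"
  proof -
    have "(1-th) * Jdef \<psi> a b m1 + th * Jdef \<psi> a b m2 \<ge> (1-th) * min (Jdef \<psi> a b m1) (Jdef \<psi> a b m2) + th * min (Jdef \<psi> a b m1) (Jdef \<psi> a b m2)"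
      using th by (intro add_mono mult_left_mono) auto
    then show ?thesis by (simp add: algebra_simps)
  qed
  ultimately show ?thesis by linarith
qed

lemma gap_point:
  assumes cv: "convex_on UNIV \<psi>" and ab: "a < m" "m < b"
    and sg: "\<forall>x. \<psi> m + s * (x - m) \<le> \<psi> x"
  defines "\<phi> \<equiv> \<lambda>x. \<psi> x - (\<psi> m + s * (x - m))"
  shows "\<And>x. \<phi> x \<ge> 0" and "\<And>x. x \<le> a \<Longrightarrow> \<phi> x \<ge> \<phi> a" and "\<And>x. x \<ge> b \<Longrightarrow> \<phi> x \<ge> \<phi> b"
    and "\<phi> a + \<phi> b \<ge> Jdef \<psi> a b m"
proof -
  show nn: "\<phi> x \<ge> 0" for x using sg by (simp add: \<phi>_def)
  show "\<phi> x \<ge> \<phi> a" if "x \<le> a" for x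
  proof -
    define th where "th = (m - a)/(m - x)"
    have th: "0 \<le> th" "th \<le> 1" using that ab by (auto simp: th_def divide_simps)
    have nz: "m - x \<noteq> 0" using that ab by simp
    have e: "th * (m - x) = m - a" using nz by (simp add: th_def)
    have aa: "a = th * x + (1-th) * m" using e by (simp add: algebra_simps)
    have c: "\<psi> (th * x + (1-th) * m) \<le> th * \<psi> x + (1-th) * \<psi> m"
      using convex_onD[OF cv, of "1-th" x m] th by simp
    have "\<psi> a \<le> th * \<psi> x + (1-th) * \<psi> m"
      using c aa by simp
    moreover have "\<phi> a = \<psi> a - \<psi> m - th*(s*(x-m))"
    proof -
      have am: "a - m = th*(x-m)" using aa by (simp add: algebra_simps)
      show ?thesis unfolding \<phi>_def am by (simp add: algebra_simps)
    qed
    moreover have "th * \<phi> x = th*\<psi> x - th*\<psi> m - th*(s*(x-m))" by (simp add: \<phi>_def algebra_simps)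
    moreover have "(1-th) * \<psi> m = \<psi> m - th * \<psi> m" by (simp add: algebra_simps)
    ultimately have "\<phi> a \<le> th * \<phi> x" by linarith
    also have "\<dots> \<le> \<phi> x" using th nn[of x] by (simp add: mult_left_le_one_le)
    finally show ?thesis .
  qed
  show "\<phi> x \<ge> \<phi> b" if "x \<ge> b" for x
  proof -
    define th where "th = (b - m)/(x - m)"
    have th: "0 \<le> th" "th \<le> 1" using that ab by (auto simp: th_def divide_simps)
    have nz: "x - m \<noteq> 0" using that ab by simp
    have e: "th * (x - m) = b - m" using nz by (simp add: th_def)
    have bb: "b = th * x + (1-th) * m" using e by (simp add: algebra_simps)
    have c: "\<psi> (th * x + (1-th) * m) \<le> th * \<psi> x + (1-th) * \<psi> m"
      using convex_onD[OF cv, of "1-th" x m] th by simp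
    have "\<psi> b \<le> th * \<psi> x + (1-th) * \<psi> m"
      using c bb by simp
    moreover have "\<phi> b = \<psi> b - \<psi> m - th*(s*(x-m))"
    proof -
      have am: "b - m = th*(x-m)" using bb by (simp add: algebra_simps)
      show ?thesis unfolding \<phi>_def am by (simp add: algebra_simps)
    qed
    moreover have "th * \<phi> x = th*\<psi> x - th*\<psi> m - th*(s*(x-m))" by (simp add: \<phi>_def algebra_simps)
    moreover have "(1-th) * \<psi> m = \<psi> m - th * \<psi> m" by (simp add: algebra_simps)
    ultimately have "\<phi> b \<le> th * \<phi> x" by linarith
    also have "\<dots> \<le> \<phi> x" using th nn[of x] by (simp add: mult_left_le_one_le)
    finally show ?thesis .
  qed
  show "\<phi> a + \<phi> b \<ge> Jdef \<psi> a b m"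
  proof -
    define l where "l = (b - m)/(b - a)"
    have l: "0 \<le> l" "l \<le> 1" using ab by (auto simp: l_def divide_simps)
    have nz: "b - a \<noteq> 0" using ab by simp
    have l1: "1 - l = (m - a)/(b - a)" using nz unfolding l_def by (simp add: field_split_simps)
    have lba: "l*(b-a) = b - m" using nz by (simp add: l_def)
    have lm: "l*(a - m) + (1-l)*(b - m) = 0" using lba by (simp add: algebra_simps)
    have J: "Jdef \<psi> a b m = l * \<psi> a + (1-l) * \<psi> b - \<psi> m"
      unfolding Jdef_def l1 by (simp add: l_def add_divide_distrib)
    have "Jdef \<psi> a b m = l * \<phi> a + (1 - l) * \<phi> b"
    proof -
      have "l * \<phi> a + (1 - l) * \<phi> b = l * \<psi> a + (1-l) * \<psi> b - \<psi> m - s * (l*(a - m) + (1-l)*(b - m))"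
        unfolding \<phi>_def by (simp add: algebra_simps)
      then show ?thesis using J lm by simp
    qed
    also have "\<dots> \<le> \<phi> a + \<phi> b"
      using l nn[of a] nn[of b] by (intro add_mono) (simp_all add: mult_left_le_one_le)
    finally show ?thesis .
  qed
qed


lemma finite_lists_UNIV: "finite {ys :: 'y::finite list. length ys = n}"
  using finite_lists_length_eq[of "UNIV :: 'y set" n] by simp

lemma sum_lists_Suc:
  fixes F :: "'y::finite list \<Rightarrow> 'a::comm_monoid_add"
  shows "(\<Sum>ys\<in>{ys. length ys = Suc n}. F ys) = (\<Sum>y\<in>UNIV. \<Sum>ys\<in>{ys. length ys = n}. F (y#ys))"
proof -
  have eq: "{ys :: 'y list. length ys = Suc n} = (\<lambda>(y,ys). y#ys) ` (UNIV \<times> {ys. length ys = n})"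
    by (auto simp: length_Suc_conv)
  have inj: "inj_on (\<lambda>(y,ys). y#ys) (UNIV \<times> {ys :: 'y list. length ys = n})"
    by (auto simp: inj_on_def)
  have "(\<Sum>ys\<in>{ys. length ys = Suc n}. F ys) = sum (F \<circ> (\<lambda>(y,ys). y#ys)) (UNIV \<times> {ys. length ys = n})"
    unfolding eq sum.reindex[OF inj] ..
  also have "F \<circ> (\<lambda>(y,ys). y#ys) = (\<lambda>(y,ys). F (y#ys))" by auto
  also have "sum \<dots> (UNIV \<times> {ys. length ys = n}) = (\<Sum>y\<in>UNIV. \<Sum>ys\<in>{ys. length ys = n}. F (y#ys))"
    by (rule sum.cartesian_product[symmetric])
  finally show ?thesis .
qed

lemma sum_prod_map2:
  fixes F :: "'z \<Rightarrow> 'y::finite \<Rightarrow> real"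
  shows "(\<Sum>ys\<in>{ys. length ys = length zs}. prod_list (map2 F zs ys)) = prod_list (map (\<lambda>z. \<Sum>y\<in>UNIV. F z y) zs)"
proof (induction zs)
  case Nil then show ?case by simp
next
  case (Cons z zs)
  have "(\<Sum>ys\<in>{ys. length ys = length (z#zs)}. prod_list (map2 F (z#zs) ys))
      = (\<Sum>y\<in>UNIV. \<Sum>ys\<in>{ys. length ys = length zs}. F z y * prod_list (map2 F zs ys))"
    by (simp add: sum_lists_Suc)
  also have "\<dots> = (\<Sum>y\<in>UNIV. F z y * (\<Sum>ys\<in>{ys. length ys = length zs}. prod_list (map2 F zs ys)))"
    by (simp add: sum_distrib_left)
  also have "\<dots> = (\<Sum>y\<in>UNIV. F z y) * prod_list (map (\<lambda>z. \<Sum>y\<in>UNIV. F z y) zs)"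
    by (simp add: Cons sum_distrib_right)
  finally show ?case by simp
qed


lemma sum_prod_map2_fst:
  fixes F :: "'y::finite \<Rightarrow> 'z \<Rightarrow> real"
  shows "(\<Sum>ys\<in>{ys. length ys = length zs}. prod_list (map2 F ys zs)) = prod_list (map (\<lambda>z. \<Sum>y\<in>UNIV. F y z) zs)"
proof (induction zs)
  case Nil then show ?case by simp
next
  case (Cons z zs)
  have "(\<Sum>ys\<in>{ys. length ys = length (z#zs)}. prod_list (map2 F ys (z#zs)))
      = (\<Sum>y\<in>UNIV. \<Sum>ys\<in>{ys. length ys = length zs}. F y z * prod_list (map2 F ys zs))"
    by (simp add: sum_lists_Suc)
  also have "\<dots> = (\<Sum>y\<in>UNIV. F y z * (\<Sum>ys\<in>{ys. length ys = length zs}. prod_list (map2 F ys zs)))"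
    by (simp add: sum_distrib_left)
  also have "\<dots> = (\<Sum>y\<in>UNIV. F y z) * prod_list (map (\<lambda>z. \<Sum>y\<in>UNIV. F y z) zs)"
    by (simp add: Cons sum_distrib_right)
  finally show ?case by simp
qed

lemma prod_list_map_const_one: "(\<And>z. f z = 1) \<Longrightarrow> prod_list (map f zs) = (1::real)"
  by (induction zs) auto

lemma sum_prod_map2_sum:
  fixes T F :: "'z \<Rightarrow> 'y::finite \<Rightarrow> real"
  assumes T1: "\<And>z. (\<Sum>y\<in>UNIV. T z y) = 1"
  shows "(\<Sum>ys\<in>{ys. length ys = length zs}. prod_list (map2 T zs ys) * sum_list (map2 F zs ys))
       = sum_list (map (\<lambda>z. \<Sum>y\<in>UNIV. T z y * F z y) zs)"
proof (induction zs)
  case Nil then show ?case by simp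
next
  case (Cons z zs)
  have one: "(\<Sum>ys\<in>{ys. length ys = length zs}. prod_list (map2 T zs ys)) = 1"
    by (simp add: sum_prod_map2 T1 prod_list_map_const_one)
  have "(\<Sum>ys\<in>{ys. length ys = length (z#zs)}. prod_list (map2 T (z#zs) ys) * sum_list (map2 F (z#zs) ys))
      = (\<Sum>y\<in>UNIV. \<Sum>ys\<in>{ys. length ys = length zs}. T z y * F z y * prod_list (map2 T zs ys)
             + T z y * (prod_list (map2 T zs ys) * sum_list (map2 F zs ys)))"
    by (simp add: sum_lists_Suc algebra_simps)
  also have "\<dots> = (\<Sum>y\<in>UNIV. T z y * F z y * (\<Sum>ys\<in>{ys. length ys = length zs}. prod_list (map2 T zs ys))
             + T z y * (\<Sum>ys\<in>{ys. length ys = length zs}. prod_list (map2 T zs ys) * sum_list (map2 F zs ys)))"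
    by (simp add: sum.distrib sum_distrib_left)
  also have "\<dots> = (\<Sum>y\<in>UNIV. T z y * F z y) + sum_list (map (\<lambda>z. \<Sum>y\<in>UNIV. T z y * F z y) zs)"
    by (simp add: one Cons sum.distrib sum_distrib_right[symmetric] T1)
  finally show ?case by simp
qed

lemma prod_map2_mult:
  "prod_list (map2 F zs ys) * prod_list (map2 G zs ys) = prod_list (map2 (\<lambda>z y. F z y * G z y) zs ys :: real list)"
proof (induction zs arbitrary: ys)
  case Nil then show ?case by simp
next
  case (Cons z zs) then show ?case by (cases ys) (simp_all add: algebra_simps)
qed

lemma exp_sum_map2:
  fixes c :: real and f :: "'z \<Rightarrow> 'y \<Rightarrow> real"
  shows "exp (c * sum_list (map2 f zs ys)) = prod_list (map2 (\<lambda>z y. exp (c * f z y)) zs ys)"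
proof (induction zs arbitrary: ys)
  case Nil then show ?case by simp
next
  case (Cons z zs) then show ?case by (cases ys) (simp_all add: distrib_left exp_add)
qed

lemma exp_le_quad:
  fixes x :: real
  assumes "\<bar>x\<bar> \<le> 1"
  shows "exp x \<le> 1 + x + x^2"
proof (cases "x \<ge> 0")
  case True then show ?thesis using exp_bound[of x] assms by simp
next
  case False
  define y where "y = -x"
  have y: "0 \<le> y" "y \<le> 1" using False assms by (auto simp: y_def)
  have ey: "1 + y + y^2/2 \<le> exp y" using exp_lower_Taylor_quadratic[of y] y by simp
  have q: "0 \<le> 1 - y + y^2" using y by (simp add: power2_eq_square)
  have "(1 - y + y^2) * (1 + y + y^2/2) = 1 + y^2/2 + y^3/2 + y^4/2"
    by (simp add: power2_eq_square power3_eq_cube power4_eq_xxxx field_simps)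
  also have "\<dots> \<ge> 1" using y by simp
  finally have "1 \<le> (1 - y + y^2) * (1 + y + y^2/2)" .
  also have "\<dots> \<le> (1 - y + y^2) * exp y" using ey q by (rule mult_left_mono)
  finally have "1 \<le> (1 - y + y^2) * exp y" .
  then have "1 / exp y \<le> 1 - y + y^2" by (simp add: divide_le_eq)
  then show ?thesis by (simp add: y_def exp_minus inverse_eq_divide)
qed

definition crate :: "real \<Rightarrow> real \<Rightarrow> real" where
  "crate t B = min (1/B) (t/(2*B^2)) * t / 2"

lemma crate_pos: "t > 0 \<Longrightarrow> B > 0 \<Longrightarrow> crate t B > 0"
  by (simp add: crate_def)

lemma chernoff:
  fixes T f :: "'z \<Rightarrow> 'y::finite \<Rightarrow> real" and t B :: real
  assumes T0: "\<And>z y. 0 \<le> T z y" and T1: "\<And>z. (\<Sum>y\<in>UNIV. T z y) = 1"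
    and cen: "\<And>z. (\<Sum>y\<in>UNIV. T z y * f z y) = 0"
    and bd: "\<And>z y. \<bar>f z y\<bar> \<le> B" and B: "B > 0" and t: "t > 0"
  shows "(\<Sum>ys\<in>{ys. length ys = length zs}.
           if t * length zs \<le> sum_list (map2 f zs ys) then prod_list (map2 T zs ys) else 0)
         \<le> exp (- crate t B * length zs)"
proof -
  define l where "l = min (1/B) (t/(2*B^2))"
  have l0: "l > 0" using B t by (simp add: l_def)
  have lB: "l * B \<le> 1" using B by (simp add: l_def min_def field_simps)
  have lB2: "l * B^2 \<le> t/2"
  proof -
    have "l \<le> t/(2*B^2)" by (simp add: l_def)
    then have "l * B^2 \<le> t/(2*B^2) * B^2" using B by (intro mult_right_mono) auto
    also have "\<dots> = t/2" using B by simp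
    finally show ?thesis .
  qed
  define n where "n = length zs"
  have Tp: "0 \<le> prod_list (map2 T zs ys)" for ys
    by (intro prod_list_nonneg) (auto simp: T0)
  have step1: "(if t * n \<le> sum_list (map2 f zs ys) then prod_list (map2 T zs ys) else 0)
      \<le> exp (- l * t * n) * (prod_list (map2 T zs ys) * exp (l * sum_list (map2 f zs ys)))" for ys
  proof (cases "t * n \<le> sum_list (map2 f zs ys)")
    case True
    have "1 \<le> exp (l * (sum_list (map2 f zs ys) - t * n))"
      using True l0 by simp
    then have "prod_list (map2 T zs ys) \<le> prod_list (map2 T zs ys) * exp (l * (sum_list (map2 f zs ys) - t * n))"
      using Tp[of ys] by (simp add: mult_le_cancel_left1)
    also have "\<dots> = exp (- l * t * n) * (prod_list (map2 T zs ys) * exp (l * sum_list (map2 f zs ys)))"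
      by (simp add: right_diff_distrib exp_diff exp_minus field_simps)
    finally show ?thesis using True by simp
  next
    case False then show ?thesis using Tp[of ys] by simp
  qed
  have fac: "(\<Sum>y\<in>UNIV. T z y * exp (l * f z y)) \<le> exp (l^2 * B^2)" for z
  proof -
    have "(\<Sum>y\<in>UNIV. T z y * exp (l * f z y)) \<le> (\<Sum>y\<in>UNIV. T z y * (1 + l * f z y + (l * f z y)^2))"
    proof (intro sum_mono mult_left_mono exp_le_quad)
      fix y
      have "\<bar>l * f z y\<bar> = l * \<bar>f z y\<bar>" using l0 by (simp add: abs_mult)
      also have "\<dots> \<le> l * B" using bd[of z y] l0 by (simp add: mult_left_mono)
      finally show "\<bar>l * f z y\<bar> \<le> 1" using lB by simp
    qed (simp add: T0)
    also have "\<dots> = (\<Sum>y\<in>UNIV. T z y) + l * (\<Sum>y\<in>UNIV. T z y * f z y) + l^2 * (\<Sum>y\<in>UNIV. T z y * (f z y)^2)"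
      by (simp add: algebra_simps sum.distrib sum_distrib_left power_mult_distrib)
    also have "\<dots> \<le> 1 + l^2 * B^2"
    proof -
      have "(\<Sum>y\<in>UNIV. T z y * (f z y)^2) \<le> (\<Sum>y\<in>UNIV. T z y * B^2)"
      proof (intro sum_mono mult_left_mono)
        fix y show "(f z y)^2 \<le> B^2" using bd[of z y]
          by (metis abs_ge_zero power2_abs power_mono)
      qed (simp add: T0)
      also have "\<dots> = B^2" by (simp add: sum_distrib_right[symmetric] T1)
      finally show ?thesis using T1 cen by (simp add: mult_left_mono)
    qed
    also have "\<dots> \<le> exp (l^2 * B^2)" using exp_ge_add_one_self[of "l^2 * B^2"] by simp
    finally show ?thesis .
  qed
  have prodbound: "prod_list (map g zs) \<le> c ^ length zs"
    if "\<And>z. 0 \<le> g z" "\<And>z. g z \<le> c" for g :: "'z \<Rightarrow> real" and c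
  proof (induction zs)
    case Nil then show ?case by simp
  next
    case (Cons a zs)
    have p0: "0 \<le> prod_list (map g zs)" by (rule prod_list_nonneg) (auto simp: that)
    have c0: "0 \<le> c" using that(1)[of a] that(2)[of a] by linarith
    have "g a * prod_list (map g zs) \<le> c * c ^ length zs"
      by (rule mult_mono) (use Cons that p0 c0 in auto)
    then show ?case by simp
  qed
  have "(\<Sum>ys\<in>{ys. length ys = length zs}. if t * length zs \<le> sum_list (map2 f zs ys) then prod_list (map2 T zs ys) else 0)
      \<le> (\<Sum>ys\<in>{ys. length ys = length zs}. exp (- l * t * n) * (prod_list (map2 T zs ys) * exp (l * sum_list (map2 f zs ys))))"
    by (intro sum_mono) (use step1 n_def in auto)
  also have "\<dots> = exp (- l * t * n) * (\<Sum>ys\<in>{ys. length ys = length zs}. prod_list (map2 (\<lambda>z y. T z y * exp (l * f z y)) zs ys))"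
    by (simp add: sum_distrib_left exp_sum_map2 prod_map2_mult)
  also have "\<dots> = exp (- l * t * n) * prod_list (map (\<lambda>z. \<Sum>y\<in>UNIV. T z y * exp (l * f z y)) zs)"
    by (simp add: sum_prod_map2)
  also have "\<dots> \<le> exp (- l * t * n) * exp (l^2 * B^2) ^ n"
  proof (rule mult_left_mono)
    show "prod_list (map (\<lambda>z. \<Sum>y\<in>UNIV. T z y * exp (l * f z y)) zs) \<le> exp (l^2 * B^2) ^ n"
      unfolding n_def by (rule prodbound) (auto simp: fac T0 intro: sum_nonneg)
  qed simp
  also have "\<dots> = exp (- (l * t - l^2 * B^2) * n)"
    by (simp add: exp_of_nat_mult[symmetric] exp_add[symmetric] algebra_simps)
  also have "\<dots> \<le> exp (- crate t B * n)"
  proof -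
    have "l * t - l^2 * B^2 \<ge> l * t / 2"
    proof -
      have "l^2 * B^2 = l * (l * B^2)" by (simp add: power2_eq_square)
      also have "\<dots> \<le> l * (t/2)" using lB2 l0 by (simp add: mult_left_mono)
      finally show ?thesis by simp
    qed
    then have "crate t B \<le> l * t - l^2 * B^2" by (simp add: crate_def l_def)
    then have "crate t B * n \<le> (l * t - l^2 * B^2) * n" by (intro mult_right_mono) auto
    then have "- (l * t - l^2 * B^2) * n \<le> - crate t B * n" by linarith
    then show ?thesis by (simp only: exp_le_cancel_iff)
  qed
  finally show ?thesis by (simp add: n_def)
qed



lemma sum_count_list:
  fixes F :: "'k::finite \<Rightarrow> real"
  shows "(\<Sum>i\<in>UNIV. real (count_list ys i) * F i) = sum_list (map F ys)"
proof (induction ys)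
  case Nil then show ?case by simp
next
  case (Cons y ys)
  have "(\<Sum>i\<in>UNIV. real (count_list (y#ys) i) * F i) = (\<Sum>i\<in>UNIV. real (count_list ys i) * F i + (if y = i then F i else 0))"
    by (intro sum.cong) (auto simp: algebra_simps)
  also have "\<dots> = sum_list (map F ys) + F y" by (simp add: sum.distrib Cons)
  finally show ?case by simp
qed

lemma emp_vmul:
  fixes N :: "real^'k::finite^'k"
  shows "(empirical ys v* N) $ k = sum_list (map (\<lambda>y. N$y$k) ys) / length ys"
proof -
  have "(empirical ys v* N) $ k = (\<Sum>i\<in>UNIV. real (count_list ys i) * N$i$k) / length ys"
    by (simp add: vector_matrix_mult_def empirical_def sum_divide_distrib)
  then show ?thesis by (simp add: sum_count_list)
qed

lemma map2_const_fst: "length xs = length ys \<Longrightarrow> map2 (\<lambda>x y. g y) xs ys = map g ys"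
  by (induction xs ys rule: list_induct2) auto

lemma map2_const_snd: "length xs = length ys \<Longrightarrow> map2 (\<lambda>x y. g x) xs ys = map g xs"
  by (induction xs ys rule: list_induct2) auto

lemma map2_replicate: "length ys = n \<Longrightarrow> map2 F (replicate n z) ys = map (F z) ys"
  by (induction ys arbitrary: n) auto

lemma seq_prob_alt: "seq_prob p V ys = prod_list (map (\<lambda>y. (p v* V)$y) ys)"
  by (simp add: seq_prob_def)

definition kern :: "real^'k^'k \<Rightarrow> 'k list \<Rightarrow> 'k list \<Rightarrow> real" where
  "kern V ys zs = prod_list (map2 (\<lambda>y z. V$y$z) ys zs)"

lemma seq_prob_comp:
  fixes W W' :: "real^'k::finite^'k"
  shows "seq_prob p (W ** W') zs = (\<Sum>ys\<in>{ys. length ys = length zs}. seq_prob p W ys * kern W' ys zs)"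
proof -
  have "(\<Sum>ys\<in>{ys. length ys = length zs}. seq_prob p W ys * kern W' ys zs)
      = (\<Sum>ys\<in>{ys. length ys = length zs}. prod_list (map2 (\<lambda>y z. (p v* W)$y * W'$y$z) ys zs))"
  proof (intro sum.cong refl)
    fix ys :: "'k list" assume "ys \<in> {ys. length ys = length zs}"
    then have l: "length ys = length zs" by simp
    show "seq_prob p W ys * kern W' ys zs = prod_list (map2 (\<lambda>y z. (p v* W)$y * W'$y$z) ys zs)"
      unfolding seq_prob_def kern_def map2_const_snd[OF l, of "\<lambda>y. (p v* W)$y", symmetric]
      by (rule prod_map2_mult)
  qed
  also have "\<dots> = prod_list (map (\<lambda>z. \<Sum>y\<in>UNIV. (p v* W)$y * W'$y$z) zs)"
    by (rule sum_prod_map2_fst)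
  also have "(\<lambda>z. \<Sum>y\<in>UNIV. (p v* W)$y * W'$y$z) = (\<lambda>z. (p v* (W ** W'))$z)"
    unfolding vector_matrix_mul_assoc[symmetric] by (rule ext) (simp add: vector_matrix_mult_def)
  also have "prod_list (map (\<lambda>z. (p v* (W ** W'))$z) zs) = seq_prob p (W ** W') zs"
    unfolding seq_prob_def ..
  finally show ?thesis by simp
qed

lemma row_stoch_sum: "row_stochastic V \<Longrightarrow> (\<Sum>z\<in>UNIV. V$y$z) = 1"
  by (simp add: row_stochastic_def)

lemma kern_nonneg: "row_stochastic V \<Longrightarrow> 0 \<le> kern V ys zs"
  unfolding kern_def by (intro prod_list_nonneg) (auto simp: row_stochastic_def)

lemma kern_sum1:
  assumes "row_stochastic V"
  shows "(\<Sum>zs\<in>{zs. length zs = length ys}. kern V ys zs) = 1"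
  unfolding kern_def sum_prod_map2 using assms
  by (simp add: row_stoch_sum prod_list_map_const_one)

lemma kern_mean:
  assumes "row_stochastic V"
  shows "(\<Sum>zs\<in>{zs. length zs = length ys}. kern V ys zs * sum_list (map c zs))
        = sum_list (map (\<lambda>y. \<Sum>z\<in>UNIV. V$y$z * c z) ys)"
proof -
  have "(\<Sum>zs\<in>{zs. length zs = length ys}. kern V ys zs * sum_list (map c zs))
     = (\<Sum>zs\<in>{zs. length zs = length ys}. prod_list (map2 (\<lambda>y z. V$y$z) ys zs) * sum_list (map2 (\<lambda>y z. c z) ys zs))"
    by (intro sum.cong refl) (simp add: kern_def map2_const_fst)
  also have "\<dots> = sum_list (map (\<lambda>y. \<Sum>z\<in>UNIV. V$y$z * c z) ys)"
    by (rule sum_prod_map2_sum) (use assms in \<open>simp add: row_stoch_sum\<close>)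
  finally show ?thesis .
qed

lemma iid_dev:
  fixes q :: "real^'k::finite" and c :: "'k \<Rightarrow> real" and t B :: real
  assumes q0: "\<And>y. 0 \<le> q$y" and q1: "(\<Sum>y\<in>UNIV. q$y) = 1"
    and mu: "(\<Sum>y\<in>UNIV. q$y * c y) = \<mu>"
    and bd: "\<And>y. \<bar>c y - \<mu>\<bar> \<le> B" and B: "B > 0" and t: "t > 0"
  shows "(\<Sum>ys\<in>{ys. length ys = n}. if t * n \<le> \<bar>sum_list (map c ys) - n * \<mu>\<bar> then prod_list (map (\<lambda>y. q$y) ys) else 0)
     \<le> 2 * exp (- crate t B * n)"
proof -
  define T where "T = (\<lambda>(u::unit) y. q$y)"
  have T0: "\<And>z y. 0 \<le> T z y" and T1: "\<And>z. (\<Sum>y\<in>UNIV. T z y) = 1" using q0 q1 by (auto simp: T_def)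
  have sl: "sum_list (map (\<lambda>y. c y - \<mu>) ys) = sum_list (map c ys) - length ys * \<mu>" for ys
    by (induction ys) (auto simp: algebra_simps)
  have sl2: "sum_list (map (\<lambda>y. \<mu> - c y) ys) = length ys * \<mu> - sum_list (map c ys)" for ys
    by (induction ys) (auto simp: algebra_simps)
  have ch1: "(\<Sum>ys\<in>{ys. length ys = length zs}. if t * length zs \<le> sum_list (map2 (\<lambda>u y. c y - \<mu>) zs ys) then prod_list (map2 T zs ys) else 0)
         \<le> exp (- crate t B * length zs)" for zs :: "unit list"
    by (rule chernoff[OF T0 T1]) (use q1 mu bd B t in \<open>auto simp: T_def sum_subtractf sum_distrib_right[symmetric] algebra_simps\<close>)
  have ch2: "(\<Sum>ys\<in>{ys. length ys = length zs}. if t * length zs \<le> sum_list (map2 (\<lambda>u y. \<mu> - c y) zs ys) then prod_list (map2 T zs ys) else 0)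
         \<le> exp (- crate t B * length zs)" for zs :: "unit list"
  proof (rule chernoff[OF T0 T1])
    show "\<And>z. (\<Sum>y\<in>UNIV. T z y * (\<mu> - c y)) = 0"
      using q1 mu by (auto simp: T_def sum_subtractf right_diff_distrib sum_distrib_right[symmetric])
    show "\<And>z y. \<bar>\<mu> - c y\<bar> \<le> B" using bd by (metis abs_minus_commute)
  qed (use B t in auto)
  let ?zs = "replicate n ()"
  have "(\<Sum>ys\<in>{ys. length ys = n}. if t * n \<le> \<bar>sum_list (map c ys) - n * \<mu>\<bar> then prod_list (map (\<lambda>y. q$y) ys) else 0)
     \<le> (\<Sum>ys\<in>{ys. length ys = n}. (if t * n \<le> sum_list (map2 (\<lambda>u y. c y - \<mu>) ?zs ys) then prod_list (map2 T ?zs ys) else 0)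
          + (if t * n \<le> sum_list (map2 (\<lambda>u y. \<mu> - c y) ?zs ys) then prod_list (map2 T ?zs ys) else 0))"
  proof (intro sum_mono)
    fix ys :: "'k list" assume "ys \<in> {ys. length ys = n}"
    then have l: "length ys = n" by simp
    have pn: "0 \<le> prod_list (map (\<lambda>y. q$y) ys)" by (intro prod_list_nonneg) (auto simp: q0)
    show "(if t * n \<le> \<bar>sum_list (map c ys) - n * \<mu>\<bar> then prod_list (map (\<lambda>y. q$y) ys) else 0)
      \<le> (if t * n \<le> sum_list (map2 (\<lambda>u y. c y - \<mu>) ?zs ys) then prod_list (map2 T ?zs ys) else 0)
          + (if t * n \<le> sum_list (map2 (\<lambda>u y. \<mu> - c y) ?zs ys) then prod_list (map2 T ?zs ys) else 0)"
      using pn unfolding map2_replicate[OF l] T_def sl sl2 l by (auto simp: abs_if)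
  qed
  also have "\<dots> \<le> exp (- crate t B * n) + exp (- crate t B * n)"
    unfolding sum.distrib using ch1[of ?zs] ch2[of ?zs] by (intro add_mono) auto
  finally show ?thesis by simp
qed


lemma prod_ge:
  assumes "length ys = length zs" and "\<And>y z. \<rho> * T y z \<le> V y z" and "\<And>y z. 0 \<le> T y z" and "0 \<le> \<rho>" and "\<And>y z. 0 \<le> V y z"
  shows "\<rho> ^ length ys * prod_list (map2 T ys zs) \<le> prod_list (map2 V ys zs :: real list)"
  using assms(1)
proof (induction ys zs rule: list_induct2)
  case Nil then show ?case by simp
next
  case (Cons y ys z zs)
  have P0: "0 \<le> prod_list (map2 T ys zs)" by (intro prod_list_nonneg) (auto simp: assms(3))
  have V0: "0 \<le> V y z" by (rule assms(5))
  have "\<rho> ^ length (y#ys) * prod_list (map2 T (y#ys) (z#zs)) = (\<rho> * T y z) * (\<rho> ^ length ys * prod_list (map2 T ys zs))"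
    by (simp add: algebra_simps)
  also have "\<dots> \<le> V y z * prod_list (map2 V ys zs)"
    by (rule mult_mono) (use Cons assms P0 in \<open>auto intro: mult_nonneg_nonneg\<close>)
  finally show ?case by simp
qed

lemma sum_list_map2_diff:
  fixes c m :: "_ \<Rightarrow> real"
  shows "length ys = length zs \<Longrightarrow> sum_list (map2 (\<lambda>y z. c z - m y) ys zs) = sum_list (map c zs) - sum_list (map m ys)"
  by (induction ys zs rule: list_induct2) (auto simp: algebra_simps)

lemma sum_list_count:
  fixes m :: "_ \<Rightarrow> real"
  shows "sum_list (map (\<lambda>y. m y - (if y = i0 then a else 0)) ys) = sum_list (map m ys) - a * count_list ys i0"
  by (induction ys) (auto simp: algebra_simps)

lemma tilt:
  fixes W' :: "real^'k::finite^'k" and col :: "'k \<Rightarrow> real" and \<tau> \<rho> Bc \<delta> :: real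
  assumes st: "row_stochastic W'" and w: "W'$i0$js > 0" and tau: "0 < \<tau>" "\<tau> \<le> 1"
    and rho: "0 \<le> \<rho>" "\<rho> \<le> W'$i0$js / (W'$i0$js + \<tau>)"
    and bc: "\<And>y. \<bar>col y\<bar> \<le> Bc" and Bc: "Bc > 0" and dl: "\<delta> > 0"
  defines "\<mu> \<equiv> \<lambda>y. \<Sum>z\<in>UNIV. W'$y$z * col z"
  shows "(\<Sum>zs\<in>{zs. length zs = length ys}.
            if sum_list (map col zs) < sum_list (map \<mu> ys) - \<tau> * (\<mu> i0 - col js) * count_list ys i0 + \<delta> * length ys
            then kern W' ys zs else 0)
         \<ge> \<rho> ^ length ys * (1 - exp (- crate \<delta> (2*Bc) * length ys))"
proof -
  define n where "n = length ys"
  define Tt where "Tt y z = (if y = i0 then (1-\<tau>) * W'$y$z + (if z = js then \<tau> else 0) else W'$y$z)" for y z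
  have W0: "\<And>y z. 0 \<le> W'$y$z" and W1: "\<And>y. (\<Sum>z\<in>UNIV. W'$y$z) = 1" using st by (auto simp: row_stochastic_def)
  have Tt0: "\<And>y z. 0 \<le> Tt y z" using W0 tau by (auto simp: Tt_def)
  have Tt1: "(\<Sum>z\<in>UNIV. Tt y z) = 1" for y
  proof (cases "y = i0")
    case True
    have "(\<Sum>z\<in>UNIV. Tt y z) = (1-\<tau>) * (\<Sum>z\<in>UNIV. W'$y$z) + (\<Sum>z\<in>UNIV. if z = js then \<tau> else 0)"
      using True by (simp add: Tt_def sum.distrib sum_distrib_left)
    then show ?thesis using W1 by simp
  next
    case False then show ?thesis using W1 by (simp add: Tt_def)
  qed
  define \<mu>t where "\<mu>t y = (\<Sum>z\<in>UNIV. Tt y z * col z)" for y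
  have mut: "\<mu>t y = \<mu> y - (if y = i0 then \<tau> * (\<mu> i0 - col js) else 0)" for y
  proof (cases "y = i0")
    case True
    have "\<mu>t y = (\<Sum>z\<in>UNIV. (1-\<tau>) * (W'$i0$z * col z) + (if z = js then \<tau> * col js else 0))"
      unfolding \<mu>t_def by (intro sum.cong) (auto simp: Tt_def True algebra_simps)
    also have "\<dots> = (1-\<tau>) * \<mu> i0 + \<tau> * col js"
      by (simp add: sum.distrib sum_distrib_left \<mu>_def)
    finally have "\<mu>t y = (1-\<tau>) * \<mu> i0 + \<tau> * col js" .
    then show ?thesis using True by (simp add: algebra_simps)
  next
    case False then show ?thesis by (simp add: \<mu>t_def Tt_def \<mu>_def)
  qed
  have mutb: "\<bar>\<mu>t y\<bar> \<le> Bc" for y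
  proof -
    have "\<bar>\<mu>t y\<bar> \<le> (\<Sum>z\<in>UNIV. \<bar>Tt y z * col z\<bar>)" unfolding \<mu>t_def by (rule sum_abs)
    also have "\<dots> \<le> (\<Sum>z\<in>UNIV. Tt y z * Bc)"
      by (intro sum_mono) (simp add: abs_mult Tt0 bc mult_left_mono)
    also have "\<dots> = Bc" by (simp add: sum_distrib_right[symmetric] Tt1)
    finally show ?thesis .
  qed
  define f where "f y z = col z - \<mu>t y" for y z
  have ch: "(\<Sum>zs\<in>{zs. length zs = length ys}. if \<delta> * length ys \<le> sum_list (map2 f ys zs) then prod_list (map2 Tt ys zs) else 0)
        \<le> exp (- crate \<delta> (2*Bc) * length ys)"
  proof (rule chernoff[OF Tt0 Tt1])
    show "\<And>y. (\<Sum>z\<in>UNIV. Tt y z * f y z) = 0"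
      by (simp add: f_def right_diff_distrib sum_subtractf sum_distrib_right[symmetric] Tt1 \<mu>t_def)
    show "\<And>y z. \<bar>f y z\<bar> \<le> 2 * Bc"
    proof -
      fix y z
      have "\<bar>col z - \<mu>t y\<bar> \<le> \<bar>col z\<bar> + \<bar>\<mu>t y\<bar>" by (rule abs_triangle_ineq4)
      then show "\<bar>f y z\<bar> \<le> 2 * Bc" using bc[of z] mutb[of y] unfolding f_def by linarith
    qed
  qed (use Bc dl in auto)
  have fac: "\<rho> * Tt y z \<le> W'$y$z" for y z
  proof -
    have r1: "\<rho> \<le> 1" using rho(2) w tau by (smt (verit) divide_le_eq_1_pos)
    show ?thesis
    proof (cases "y = i0")
      case False then show ?thesis using r1 rho(1) W0[of y z] by (simp add: Tt_def mult_left_le_one_le)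
    next
      case True
      show ?thesis
      proof (cases "z = js")
        case False
        have "\<rho> * ((1-\<tau>) * W'$y$z) \<le> 1 * (1 * W'$y$z)"
          using r1 rho(1) tau W0[of y z] by (intro mult_mono) auto
        then show ?thesis using True False by (simp add: Tt_def)
      next
        case zj: True
        have "\<rho> * ((1-\<tau>) * W'$i0$js + \<tau>) \<le> \<rho> * (W'$i0$js + \<tau>)"
          using rho(1) tau w by (intro mult_left_mono) (auto simp: algebra_simps mult_nonneg_nonneg)
        also have "\<dots> \<le> W'$i0$js / (W'$i0$js + \<tau>) * (W'$i0$js + \<tau>)"
          using rho w tau by (intro mult_right_mono) auto
        also have "\<dots> = W'$i0$js" using w tau by simp
        finally show ?thesis using True zj by (simp add: Tt_def)
      qed
    qed
  qed
  let ?c = "\<lambda>zs. sum_list (map col zs) < sum_list (map \<mu> ys) - \<tau> * (\<mu> i0 - col js) * count_list ys i0 + \<delta> * length ys"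
  have cond: "?c zs \<longleftrightarrow> \<not> (\<delta> * length ys \<le> sum_list (map2 f ys zs))" if "length zs = length ys" for zs
  proof -
    have "sum_list (map2 f ys zs) = sum_list (map col zs) - sum_list (map \<mu>t ys)"
      unfolding f_def using that by (intro sum_list_map2_diff) simp
    also have "sum_list (map \<mu>t ys) = sum_list (map \<mu> ys) - \<tau> * (\<mu> i0 - col js) * count_list ys i0"
      unfolding mut by (simp add: sum_list_count)
    finally show ?thesis by linarith
  qed
  have "(\<Sum>zs\<in>{zs. length zs = length ys}. if ?c zs then kern W' ys zs else 0)
      \<ge> (\<Sum>zs\<in>{zs. length zs = length ys}. \<rho> ^ length ys * (prod_list (map2 Tt ys zs)
            - (if \<delta> * length ys \<le> sum_list (map2 f ys zs) then prod_list (map2 Tt ys zs) else 0)))"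
  proof (intro sum_mono)
    fix zs :: "'k list" assume "zs \<in> {zs. length zs = length ys}"
    then have l: "length zs = length ys" by simp
    have kg: "\<rho> ^ length ys * prod_list (map2 Tt ys zs) \<le> kern W' ys zs"
      unfolding kern_def by (rule prod_ge) (use l fac Tt0 rho W0 in auto)
    show "\<rho> ^ length ys * (prod_list (map2 Tt ys zs) - (if \<delta> * length ys \<le> sum_list (map2 f ys zs) then prod_list (map2 Tt ys zs) else 0))
        \<le> (if ?c zs then kern W' ys zs else 0)"
      using cond[OF l] kg by auto
  qed
  moreover have "(\<Sum>zs\<in>{zs. length zs = length ys}. \<rho> ^ length ys * (prod_list (map2 Tt ys zs)
            - (if \<delta> * length ys \<le> sum_list (map2 f ys zs) then prod_list (map2 Tt ys zs) else 0)))
      = \<rho> ^ length ys * (1 - (\<Sum>zs\<in>{zs. length zs = length ys}. if \<delta> * length ys \<le> sum_list (map2 f ys zs) then prod_list (map2 Tt ys zs) else 0))"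
    by (simp add: sum_distrib_left[symmetric] sum_subtractf sum_prod_map2 Tt1 prod_list_map_const_one)
  moreover have "\<rho> ^ length ys * (1 - (\<Sum>zs\<in>{zs. length zs = length ys}. if \<delta> * length ys \<le> sum_list (map2 f ys zs) then prod_list (map2 Tt ys zs) else 0))
      \<ge> \<rho> ^ length ys * (1 - exp (- crate \<delta> (2*Bc) * length ys))"
    using ch rho(1) by (intro mult_left_mono) auto
  ultimately show ?thesis by linarith
qed


lemma minv:
  fixes A :: "real^'k::finite^'k"
  assumes "invertible A"
  shows "A ** matrix_inv A = mat 1" "matrix_inv A ** A = mat 1"
proof -
  have "\<exists>A'. A ** A' = mat 1 \<and> A' ** A = mat 1" using assms by (simp add: invertible_def)
  then have "A ** matrix_inv A = mat 1 \<and> matrix_inv A ** A = mat 1"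
    unfolding matrix_inv_def by (rule someI_ex)
  then show "A ** matrix_inv A = mat 1" "matrix_inv A ** A = mat 1" by auto
qed

lemma invertible_minv:
  fixes A :: "real^'k::finite^'k"
  assumes "invertible A"
  shows "invertible (matrix_inv A)"
  unfolding invertible_def using minv[OF assms] by blast

lemma vmul_inj:
  fixes A :: "real^'k::finite^'k"
  assumes "invertible A" "x v* A = 0"
  shows "x = 0"
proof -
  have "x = x v* (A ** matrix_inv A)" using minv[OF assms(1)] by simp
  also have "\<dots> = (x v* A) v* matrix_inv A" by (simp add: vector_matrix_mul_assoc)
  finally show ?thesis using assms(2) by simp
qed

lemma minv_rowsum:
  fixes V :: "real^'k::finite^'k"
  assumes st: "row_stochastic V" and inv: "invertible V"
  shows "(\<Sum>k\<in>UNIV. matrix_inv V $ y $ k) = 1"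
proof -
  have V1: "V *v vec 1 = vec 1"
    using st by (simp add: matrix_vector_mult_def row_stochastic_def vec_eq_iff)
  have "matrix_inv V *v vec 1 = matrix_inv V *v (V *v vec 1)" by (simp only: V1)
  also have "\<dots> = vec 1" by (simp add: matrix_vector_mul_assoc minv[OF inv])
  finally have "(matrix_inv V *v vec 1) $ y = 1" by simp
  then show ?thesis by (simp add: matrix_vector_mult_def)
qed

lemma col_pos:
  fixes W :: "real^'k::finite^'k"
  assumes st: "row_stochastic W" and inv: "invertible W" and pp: "\<forall>k. 0 < p$k"
  shows "0 < (p v* W) $ y"
proof (rule ccontr)
  assume "\<not> 0 < (p v* W) $ y"
  then have s0: "(\<Sum>i\<in>UNIV. p$i * W$i$y) \<le> 0" by (simp add: vector_matrix_mult_def)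
  have nn: "\<forall>i\<in>UNIV. 0 \<le> p$i * W$i$y" using st pp by (auto simp: row_stochastic_def less_imp_le)
  have "(\<Sum>i\<in>UNIV. p$i * W$i$y) = 0" using s0 nn by (meson antisym sum_nonneg)
  then have "\<forall>i. p$i * W$i$y = 0" using nn by (simp add: sum_nonneg_eq_0_iff)
  then have z: "\<forall>i. W$i$y = 0" using pp by (metis less_irrefl mult_eq_0_iff)
  define e :: "real^'k" where "e = (\<chi> j. if j = y then 1 else 0)"
  have "(W *v e)$i = 0" for i
  proof -
    have "(W *v e)$i = (\<Sum>j\<in>UNIV. W$i$j * (if j = y then 1 else 0))"
      unfolding matrix_vector_mult_def e_def by simp
    also have "\<dots> = (\<Sum>j\<in>UNIV. if j = y then W$i$j else 0)" by (rule sum.cong) auto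
    finally have "(W *v e)$i = (\<Sum>j\<in>UNIV. if j = y then W$i$j else 0)" .
    then show ?thesis using z by simp
  qed
  then have "W *v e = 0" by (simp add: vec_eq_iff)
  moreover have "W *v 0 = 0" by simp
  ultimately have "e = 0" using inj_matrix_vector_mult[OF inv] by (metis injD)
  then have "e $ y = 0" by simp
  then show False by (simp add: e_def)
qed

lemma rows_differ:
  fixes M :: "real^'k::finite^'k"
  assumes inv: "invertible M" and "j1 \<noteq> j2"
  shows "\<exists>k. M$j1$k \<noteq> M$j2$k"
proof (rule ccontr)
  assume "\<not> ?thesis"
  then have eq: "\<forall>k. M$j1$k = M$j2$k" by simp
  define x :: "real^'k" where "x = (\<chi> j. if j = j1 then 1 else if j = j2 then -1 else 0)"
  have "x v* M = 0"
  proof -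
    have "(x v* M)$k = 0" for k
    proof -
      have "(x v* M)$k = (\<Sum>j\<in>UNIV. (if j = j1 then M$j1$k else 0) + (if j = j2 then - M$j2$k else 0))"
        unfolding vector_matrix_mult_def x_def using assms(2) by (auto intro!: sum.cong)
      also have "\<dots> = 0" using eq by (simp add: sum.distrib)
      finally show ?thesis .
    qed
    then show ?thesis by (simp add: vec_eq_iff)
  qed
  then have "x = 0" by (rule vmul_inj[OF inv])
  then have "x $ j1 = 0" by simp
  then show False by (simp add: x_def)
qed

lemma two_support:
  fixes W' :: "real^'k::finite^'k"
  assumes st: "row_stochastic W'" and inv: "invertible W'" and np: "\<not> permutation_matrix W'"
  shows "\<exists>i0 j1 j2. j1 \<noteq> j2 \<and> W'$i0$j1 > 0 \<and> W'$i0$j2 > 0"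
proof (rule ccontr)
  assume "\<not> ?thesis"
  then have uniq: "\<And>i j1 j2. W'$i$j1 > 0 \<Longrightarrow> W'$i$j2 > 0 \<Longrightarrow> j1 = j2" by blast
  have W0: "\<And>i j. 0 \<le> W'$i$j" and W1: "\<And>i. (\<Sum>j\<in>UNIV. W'$i$j) = 1"
    using st by (auto simp: row_stochastic_def)
  have ex: "\<exists>j. W'$i$j > 0" for i
  proof (rule ccontr)
    assume "\<not> (\<exists>j. W'$i$j > 0)"
    then have "\<forall>j. W'$i$j = 0" using W0 by (metis less_eq_real_def)
    then show False using W1[of i] by simp
  qed
  define \<sigma> where "\<sigma> i = (SOME j. W'$i$j > 0)" for i
  have s: "W'$i$(\<sigma> i) > 0" for i unfolding \<sigma>_def using ex[of i] by (rule someI_ex)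
  have form: "W'$i$j = (if \<sigma> i = j then 1 else 0)" for i j
  proof -
    have z: "W'$i$j' = 0" if "j' \<noteq> \<sigma> i" for j'
      using uniq[of i j' "\<sigma> i"] s[of i] W0[of i j'] that by (metis less_eq_real_def)
    have "(\<Sum>j\<in>UNIV. W'$i$j) = (\<Sum>j\<in>UNIV. if j = \<sigma> i then W'$i$(\<sigma> i) else 0)"
      by (intro sum.cong) (auto simp: z)
    then have "(\<Sum>j\<in>UNIV. W'$i$j) = W'$i$(\<sigma> i)" by simp
    then have "W'$i$(\<sigma> i) = 1" using W1[of i] by simp
    then show ?thesis using z by auto
  qed
  have inj: "inj \<sigma>"
  proof (rule injI, rule ccontr)
    fix i i' assume e: "\<sigma> i = \<sigma> i'" and ne: "i \<noteq> i'"
    obtain k where "W'$i$k \<noteq> W'$i'$k" using rows_differ[OF inv ne] by blast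
    then show False using form e by simp
  qed
  have "\<sigma> permutes (UNIV :: 'k set)"
    by (rule bij_imp_permutes) (use inj finite_UNIV_inj_surj[OF _ inj] in \<open>auto simp: bij_def\<close>)
  moreover have "W' = (\<chi> i j. if \<sigma> i = j then 1 else 0)" using form by (simp add: vec_eq_iff)
  ultimately show False using np unfolding permutation_matrix_def by blast
qed


lemma conv_bound:
  fixes \<phi> :: "real \<Rightarrow> real"
  assumes cv: "convex_on I \<phi>" and sub: "{lo..hi} \<subseteq> I" and m: "m \<in> I" "u \<in> I" "u < m" "v \<in> I" "m < v"
  shows "\<exists>U. \<forall>x\<in>{lo..hi}. \<bar>\<phi> x\<bar> \<le> U"
proof -
  obtain s where s: "\<forall>x\<in>I. \<phi> m + s * (x - m) \<le> \<phi> x" using subgrad[OF cv m] by blast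
  have cv2: "convex_on {lo..hi} \<phi>" by (rule convex_on_subset[OF cv sub]) simp
  define U where "U = max (\<bar>\<phi> lo\<bar> + \<bar>\<phi> hi\<bar>) (\<bar>\<phi> m\<bar> + \<bar>s\<bar> * (\<bar>lo\<bar> + \<bar>hi\<bar> + \<bar>m\<bar>))"
  have "\<bar>\<phi> x\<bar> \<le> U" if x: "x \<in> {lo..hi}" for x
  proof -
    have up: "\<phi> x \<le> max (\<phi> lo) (\<phi> hi)" by (rule convex_on_le_max[OF cv2 x])
    have xI: "x \<in> I" using x sub by auto
    have low: "\<phi> m + s * (x - m) \<le> \<phi> x" using s xI by auto
    have "\<bar>s * (x - m)\<bar> \<le> \<bar>s\<bar> * (\<bar>lo\<bar> + \<bar>hi\<bar> + \<bar>m\<bar>)"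
    proof -
      have "\<bar>x - m\<bar> \<le> \<bar>lo\<bar> + \<bar>hi\<bar> + \<bar>m\<bar>" using x by auto
      then show ?thesis by (simp add: abs_mult mult_left_mono)
    qed
    then show ?thesis using up low unfolding U_def by (smt (verit))
  qed
  then show ?thesis by blast
qed

lemma ev_exp:
  fixes c e :: real
  assumes c: "c > 0" and e: "e > 0"
  shows "\<forall>\<^sub>F n in sequentially. exp (- c * real n) < e"
proof -
  obtain N :: nat where N: "N > 1 / (c * e)" using reals_Archimedean2 by blast
  show ?thesis unfolding eventually_sequentially
  proof (intro exI allI impI)
    fix n assume "N \<le> n"
    then have nN: "real n > 1 / (c * e)" using N by linarith
    have pos: "0 < c * e" using c e by simp
    have "1 < c * e * real n" using nN pos by (simp add: divide_less_eq mult.commute)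
    also have "\<dots> < e * (1 + c * real n)" using e by (simp add: algebra_simps)
    also have "\<dots> \<le> e * exp (c * real n)" using e by (simp add: exp_ge_add_one_self[unfolded add.commute[of 1]])
    finally have "1 < e * exp (c * real n)" .
    then show "exp (- c * real n) < e" by (simp add: exp_minus field_simps)
  qed
qed

lemma sum_list_abs_bound:
  fixes c :: "'a \<Rightarrow> real" and B :: real
  assumes "\<And>y. \<bar>c y\<bar> \<le> B"
  shows "\<bar>sum_list (map c ys)\<bar> \<le> real (length ys) * B"
proof (induction ys)
  case Nil then show ?case by simp
next
  case (Cons y ys)
  have "\<bar>sum_list (map c (y#ys))\<bar> \<le> \<bar>c y\<bar> + \<bar>sum_list (map c ys)\<bar>" by (simp add: abs_triangle_ineq)
  also have "\<dots> \<le> B + length ys * B" using assms[of y] Cons by linarith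
  finally show ?case by (simp add: algebra_simps)
qed

lemma pv_simplex:
  fixes V :: "real^'k::finite^'k"
  assumes "p \<in> prob_simplex" "row_stochastic V"
  shows "\<And>y. 0 \<le> (p v* V)$y" "(\<Sum>y\<in>UNIV. (p v* V)$y) = 1"
proof -
  show "0 \<le> (p v* V)$y" for y
    using assms by (auto simp: prob_simplex_def row_stochastic_def vector_matrix_mult_def intro!: sum_nonneg)
  have "(\<Sum>y\<in>UNIV. (p v* V)$y) = (\<Sum>i\<in>UNIV. p$i * (\<Sum>y\<in>UNIV. V$i$y))"
    by (simp add: vector_matrix_mult_def sum_distrib_left) (rule sum.swap)
  also have "\<dots> = 1" using assms by (simp add: prob_simplex_def row_stochastic_def)
  finally show "(\<Sum>y\<in>UNIV. (p v* V)$y) = 1" .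
qed

lemma stoch_mult:
  fixes W W' :: "real^'k::finite^'k"
  assumes "row_stochastic W" "row_stochastic W'"
  shows "row_stochastic (W ** W')"
proof -
  have "0 \<le> (W ** W')$i$j" for i j
    using assms by (auto simp: row_stochastic_def matrix_matrix_mult_def intro!: sum_nonneg)
  moreover have "(\<Sum>j\<in>UNIV. (W ** W')$i$j) = 1" for i
  proof -
    have "(\<Sum>j\<in>UNIV. (W ** W')$i$j) = (\<Sum>k\<in>UNIV. W$i$k * (\<Sum>j\<in>UNIV. W'$k$j))"
      by (simp add: matrix_matrix_mult_def sum_distrib_left) (rule sum.swap)
    also have "\<dots> = 1" using assms by (simp add: row_stochastic_def)
    finally show ?thesis .
  qed
  ultimately show ?thesis by (simp add: row_stochastic_def)
qed


lemma sum_list_ind: "sum_list (map (\<lambda>y. if y = i0 then 1 else 0) ys) = real (count_list ys i0)"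
  by (induction ys) auto

lemma sum_sum_list:
  fixes F :: "'a \<Rightarrow> 'b \<Rightarrow> real"
  shows "(\<Sum>k\<in>K. sum_list (map (\<lambda>y. F y k) ys)) = sum_list (map (\<lambda>y. \<Sum>k\<in>K. F y k) ys)"
  by (induction ys) (auto simp: sum.distrib)

locale thm5_ctx =
  fixes p :: "real^'k::finite" and W W' :: "real^'k^'k" and Proj :: "real^'k \<Rightarrow> real^'k"
    and g :: "real^'k \<Rightarrow> real^'k \<Rightarrow> real" and h :: "'k \<Rightarrow> real \<Rightarrow> real"
  assumes ps: "p \<in> prob_simplex" and ppos: "\<forall>k. 0 < p$k"
    and stW: "row_stochastic W" and invW: "invertible W"
    and stW': "row_stochastic W'" and invW': "invertible W'"
    and np: "\<not> permutation_matrix W'" and proj: "is_simplex_proj Proj"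
    and gdef: "\<forall>q. g q p = (\<Sum>k\<in>UNIV. h k (q$k))"
    and hconv: "\<forall>k. convex_on {0..} (h k)"
    and hstrict: "\<forall>k a b l. 0 \<le> a \<longrightarrow> a < p$k \<longrightarrow> p$k < b \<longrightarrow> 0 < l \<longrightarrow> l < 1 \<longrightarrow>
                     h k (l*a + (1-l)*b) < l * h k a + (1-l) * h k b"
begin

definition "Winv = matrix_inv W"
definition "M = matrix_inv (W ** W')"
definition "r = p v* W"
definition "q = p v* (W ** W')"

lemma invWW: "invertible (W ** W')" using invW invW' by (rule invertible_mult)
lemma stWW: "row_stochastic (W ** W')" using stW stW' by (rule stoch_mult)

lemma WM: "W' ** M = Winv"
proof -
  have "W ** (W' ** M) = mat 1" using minv(1)[OF invWW] by (simp add: M_def matrix_mul_assoc)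
  then have "Winv ** (W ** (W' ** M)) = Winv" by simp
  then show ?thesis using minv(2)[OF invW] by (simp add: Winv_def matrix_mul_assoc)
qed

lemma WMe: "(\<Sum>z\<in>UNIV. W'$y$z * M$z$k) = Winv$y$k"
proof -
  have "(W' ** M)$y$k = Winv$y$k" using WM by simp
  then show ?thesis by (simp add: matrix_matrix_mult_def)
qed

lemma rW: "(\<Sum>y\<in>UNIV. r$y * Winv$y$k) = p$k"
proof -
  have "r v* Winv = p" unfolding r_def Winv_def by (simp add: vector_matrix_mul_assoc minv[OF invW])
  then have "(r v* Winv)$k = p$k" by simp
  then show ?thesis by (simp add: vector_matrix_mult_def)
qed

lemma qM: "(\<Sum>y\<in>UNIV. q$y * M$y$k) = p$k"
proof -
  have "q v* M = p" unfolding q_def M_def by (simp add: vector_matrix_mul_assoc minv[OF invWW])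
  then have "(q v* M)$k = p$k" by simp
  then show ?thesis by (simp add: vector_matrix_mult_def)
qed

lemma r0: "0 \<le> r$y" and r1: "(\<Sum>y\<in>UNIV. r$y) = 1"
  using pv_simplex[OF ps stW] by (auto simp: r_def)
lemma q0: "0 \<le> q$y" and q1: "(\<Sum>y\<in>UNIV. q$y) = 1"
  using pv_simplex[OF ps stWW] by (auto simp: q_def)

lemma Winv_row: "(\<Sum>k\<in>UNIV. Winv$y$k) = 1"
  unfolding Winv_def by (rule minv_rowsum[OF stW invW])
lemma M_row: "(\<Sum>k\<in>UNIV. M$y$k) = 1"
  unfolding M_def by (rule minv_rowsum[OF stWW invWW])

definition "Bx = 1 + (\<Sum>y\<in>UNIV. \<Sum>k\<in>UNIV. \<bar>Winv$y$k\<bar> + \<bar>M$y$k\<bar>)"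

lemma Bx_bounds: "\<bar>Winv$y$k\<bar> \<le> Bx" "\<bar>M$y$k\<bar> \<le> Bx" "Bx \<ge> 1"
proof -
  have a: "\<bar>Winv$y$k\<bar> + \<bar>M$y$k\<bar> \<le> (\<Sum>k\<in>UNIV. \<bar>Winv$y$k\<bar> + \<bar>M$y$k\<bar>)"
    by (rule member_le_sum) auto
  have b: "(\<Sum>k\<in>UNIV. \<bar>Winv$y$k\<bar> + \<bar>M$y$k\<bar>) \<le> (\<Sum>y\<in>UNIV. \<Sum>k\<in>UNIV. \<bar>Winv$y$k\<bar> + \<bar>M$y$k\<bar>)"
    by (rule member_le_sum) (auto intro: sum_nonneg)
  have c: "0 \<le> (\<Sum>y\<in>UNIV. \<Sum>k\<in>UNIV. \<bar>Winv$y$k\<bar> + \<bar>M$y$k\<bar>)" by (intro sum_nonneg) auto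
  show "\<bar>Winv$y$k\<bar> \<le> Bx" "\<bar>M$y$k\<bar> \<le> Bx" "Bx \<ge> 1" using a b c by (auto simp: Bx_def)
qed

lemma p_le1: "p$k \<le> 1"
proof -
  have "p$k \<le> (\<Sum>k\<in>UNIV. p$k)" by (rule member_le_sum) (use ps in \<open>auto simp: prob_simplex_def\<close>)
  then show ?thesis using ps by (simp add: prob_simplex_def)
qed

definition "pmin = Min (range (\<lambda>k. p$k))"
lemma pmin: "0 < pmin" "pmin \<le> p$k"
  unfolding pmin_def using ppos by (auto intro: Min_le)

definition "\<eta> = pmin / 2"

lemma psi_ex: "\<exists>\<psi>. \<forall>k. convex_on UNIV (\<psi> k) \<and> (\<forall>x\<ge>p$k/2. \<psi> k x = h k x)"
proof -
  have "\<forall>k. \<exists>\<phi>. convex_on UNIV \<phi> \<and> (\<forall>x\<ge>p$k/2. \<phi> x = h k x)"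
    using convex_ext hconv ppos by (metis half_gt_zero)
  then show ?thesis by metis
qed

definition "\<psi> = (SOME \<psi>. \<forall>k. convex_on UNIV (\<psi> k) \<and> (\<forall>x\<ge>p$k/2. \<psi> k x = h k x))"

lemma psi: "convex_on UNIV (\<psi> k)" "x \<ge> p$k/2 \<Longrightarrow> \<psi> k x = h k x"
  using someI_ex[OF psi_ex] unfolding \<psi>_def[symmetric] by auto

lemma Upsi_ex: "\<exists>U. \<forall>k. \<forall>x\<in>{-Bx..Bx}. \<bar>\<psi> k x\<bar> \<le> U k"
proof -
  have "\<forall>k. \<exists>U. \<forall>x\<in>{-Bx..Bx}. \<bar>\<psi> k x\<bar> \<le> U"
    using conv_bound[OF psi(1), of "-Bx" Bx 0 "-1" 1] by auto
  then show ?thesis by metis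
qed

lemma Uh_ex: "\<exists>U. \<forall>k. \<forall>x\<in>{0..1}. \<bar>h k x\<bar> \<le> U k"
proof -
  have "\<exists>U. \<forall>x\<in>{0..1}. \<bar>h k x\<bar> \<le> U" for k
  proof -
    have pk: "0 < p$k" using ppos by simp
    show ?thesis by (rule conv_bound[OF hconv[rule_format, of k], of 0 1 "p$k" 0 "p$k + 1"]) (use pk in auto)
  qed
  then show ?thesis by metis
qed

definition "Upsi = (SOME U. \<forall>k. \<forall>x\<in>{-Bx..Bx}. \<bar>\<psi> k x\<bar> \<le> U k)"
definition "Uh = (SOME U. \<forall>k. \<forall>x\<in>{0..1}. \<bar>h k x\<bar> \<le> U k)"
lemma Upsi: "x \<in> {-Bx..Bx} \<Longrightarrow> \<bar>\<psi> k x\<bar> \<le> Upsi k"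
  using someI_ex[OF Upsi_ex] unfolding Upsi_def[symmetric] by auto
lemma Uh: "x \<in> {0..1} \<Longrightarrow> \<bar>h k x\<bar> \<le> Uh k"
  using someI_ex[OF Uh_ex] unfolding Uh_def[symmetric] by auto

definition "CC = 1 + (\<Sum>k\<in>UNIV. Upsi k + Uh k)"

definition "Psi x = (\<Sum>k\<in>UNIV. \<psi> k (x$k))"
definition "G x = g (Proj x) p"

lemma CC_pos: "CC \<ge> 1"
proof -
  have "0 \<le> Upsi k + Uh k" for k using Upsi[of 0 k] Uh[of 0 k] Bx_bounds(3) by fastforce
  then show ?thesis by (simp add: CC_def sum_nonneg)
qed

lemma G_Psi_bound:
  assumes "(\<Sum>k\<in>UNIV. x$k) = 1" "\<forall>k. \<bar>x$k\<bar> \<le> Bx"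
  shows "\<bar>G x - Psi x\<bar> \<le> CC"
proof -
  have PS: "Proj x \<in> prob_simplex" using proj assms(1) by (simp add: is_simplex_proj_def)
  have comp: "Proj x $ k \<in> {0..1}" for k
  proof -
    have "Proj x $ k \<le> (\<Sum>k\<in>UNIV. Proj x $ k)" by (rule member_le_sum) (use PS in \<open>auto simp: prob_simplex_def\<close>)
    then show ?thesis using PS by (auto simp: prob_simplex_def)
  qed
  have "\<bar>G x\<bar> \<le> (\<Sum>k\<in>UNIV. Uh k)"
  proof -
    have "\<bar>G x\<bar> = \<bar>\<Sum>k\<in>UNIV. h k (Proj x $ k)\<bar>" by (simp add: G_def gdef)
    also have "\<dots> \<le> (\<Sum>k\<in>UNIV. \<bar>h k (Proj x $ k)\<bar>)" by (rule sum_abs)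
    also have "\<dots> \<le> (\<Sum>k\<in>UNIV. Uh k)" by (intro sum_mono Uh comp)
    finally show ?thesis .
  qed
  moreover have "\<bar>Psi x\<bar> \<le> (\<Sum>k\<in>UNIV. Upsi k)"
  proof -
    have "\<bar>Psi x\<bar> \<le> (\<Sum>k\<in>UNIV. \<bar>\<psi> k (x$k)\<bar>)" unfolding Psi_def by (rule sum_abs)
    also have "\<dots> \<le> (\<Sum>k\<in>UNIV. Upsi k)"
    proof (intro sum_mono Upsi)
      fix k
      have "\<bar>x$k\<bar> \<le> Bx" using assms(2) by blast
      then show "x$k \<in> {-Bx..Bx}" by (simp add: abs_le_iff)
    qed
    finally show ?thesis .
  qed
  ultimately show ?thesis unfolding CC_def by (simp add: sum.distrib)
qed

lemma G_Psi_good: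
  assumes "(\<Sum>k\<in>UNIV. x$k) = 1" "\<forall>k. \<bar>x$k - p$k\<bar> < \<eta>"
  shows "G x = Psi x"
proof -
  have lb: "x$k \<ge> p$k/2" for k
  proof -
    have "\<eta> \<le> p$k/2" using pmin(2)[of k] by (simp add: \<eta>_def)
    then show ?thesis using assms(2)[rule_format, of k] by linarith
  qed
  have x0: "0 \<le> x$k" for k using lb[of k] ppos[rule_format, of k] by linarith
  have "x \<in> prob_simplex" unfolding prob_simplex_def using assms(1) x0 by auto
  then have "Proj x = x" using proj by (simp add: is_simplex_proj_def)
  then show ?thesis by (simp add: G_def Psi_def gdef psi(2)[OF lb])
qed

end


context thm5_ctx
begin

definition "A ys = empirical ys v* Winv"
definition "A' zs = empirical zs v* M"
definition "S k ys = sum_list (map (\<lambda>y. Winv$y$k) ys)"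
definition "S' k zs = sum_list (map (\<lambda>y. M$y$k) zs)"

lemma A_comp: "(A ys)$k = S k ys / length ys"
  unfolding A_def S_def by (rule emp_vmul)
lemma A'_comp: "(A' zs)$k = S' k zs / length zs"
  unfolding A'_def S'_def by (rule emp_vmul)

lemma sum_list_one: "sum_list (map (\<lambda>y. (1::real)) ys) = real (length ys)"
  by (induction ys) auto

lemma A_sum1: assumes "length ys \<ge> 1" shows "(\<Sum>k\<in>UNIV. (A ys)$k) = 1"
  using assms unfolding A_comp S_def sum_divide_distrib[symmetric] sum_sum_list by (cases ys) (auto simp: Winv_row sum_list_one)
lemma A'_sum1: assumes "length zs \<ge> 1" shows "(\<Sum>k\<in>UNIV. (A' zs)$k) = 1"
  using assms unfolding A'_comp S'_def sum_divide_distrib[symmetric] sum_sum_list by (cases zs) (auto simp: M_row sum_list_one)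

lemma A_bd: "\<bar>(A ys)$k\<bar> \<le> Bx"
proof (cases "ys = []")
  case True then show ?thesis using Bx_bounds(3) by (simp add: A_comp)
next
  case False
  have "\<bar>S k ys\<bar> \<le> length ys * Bx" unfolding S_def using sum_list_abs_bound[of "\<lambda>y. Winv$y$k" Bx ys] Bx_bounds(1) by simp
  then show ?thesis using False by (simp add: A_comp divide_le_eq abs_divide mult.commute)
qed
lemma A'_bd: "\<bar>(A' zs)$k\<bar> \<le> Bx"
proof (cases "zs = []")
  case True then show ?thesis using Bx_bounds(3) by (simp add: A'_comp)
next
  case False
  have "\<bar>S' k zs\<bar> \<le> length zs * Bx" unfolding S'_def using sum_list_abs_bound[of "\<lambda>y. M$y$k" Bx zs] Bx_bounds(2) by simp
  then show ?thesis using False by (simp add: A'_comp divide_le_eq abs_divide mult.commute)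
qed

definition "badA ys = (\<exists>k. \<eta> * length ys \<le> \<bar>S k ys - length ys * p$k\<bar>)"
definition "badA' zs = (\<exists>k. \<eta> * length zs \<le> \<bar>S' k zs - length zs * p$k\<bar>)"

lemma G_le:
  assumes "length ys \<ge> 1"
  shows "G (A ys) \<le> Psi (A ys) + CC * (if badA ys then 1 else 0)"
proof (cases "badA ys")
  case True
  have "\<bar>G (A ys) - Psi (A ys)\<bar> \<le> CC" using G_Psi_bound A_sum1[OF assms] A_bd by blast
  then show ?thesis using True by simp
next
  case False
  have "\<forall>k. \<bar>(A ys)$k - p$k\<bar> < \<eta>"
  proof
    fix k
    have ne: "ys \<noteq> []" using assms by (cases ys) auto
    have n0: "real (length ys) > 0" using ne by simp
    have "\<bar>S k ys - length ys * p$k\<bar> < \<eta> * length ys" using False by (auto simp: badA_def not_le)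
    moreover have "(A ys)$k - p$k = (S k ys - length ys * p$k) / length ys" using n0 ne by (simp add: A_comp field_simps)
    ultimately show "\<bar>(A ys)$k - p$k\<bar> < \<eta>" using n0 by (simp add: abs_divide divide_less_eq)
  qed
  then have "G (A ys) = Psi (A ys)" using G_Psi_good A_sum1[OF assms] by blast
  then show ?thesis using False by simp
qed

lemma G_ge:
  assumes "length zs \<ge> 1"
  shows "G (A' zs) \<ge> Psi (A' zs) - CC * (if badA' zs then 1 else 0)"
proof (cases "badA' zs")
  case True
  have "\<bar>G (A' zs) - Psi (A' zs)\<bar> \<le> CC" using G_Psi_bound A'_sum1[OF assms] A'_bd by blast
  then show ?thesis using True by simp
next
  case False
  have "\<forall>k. \<bar>(A' zs)$k - p$k\<bar> < \<eta>"
  proof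
    fix k
    have ne: "zs \<noteq> []" using assms by (cases zs) auto
    have n0: "real (length zs) > 0" using ne by simp
    have "\<bar>S' k zs - length zs * p$k\<bar> < \<eta> * length zs" using False by (auto simp: badA'_def not_le)
    moreover have "(A' zs)$k - p$k = (S' k zs - length zs * p$k) / length zs" using n0 ne by (simp add: A'_comp field_simps)
    ultimately show "\<bar>(A' zs)$k - p$k\<bar> < \<eta>" using n0 by (simp add: abs_divide divide_less_eq)
  qed
  then have "G (A' zs) = Psi (A' zs)" using G_Psi_good A'_sum1[OF assms] by blast
  then show ?thesis using False by simp
qed

lemma loss_W: "expected_loss Proj g n p W = (\<Sum>ys\<in>{ys. length ys = n}. seq_prob p W ys * G (A ys))"
  by (simp add: expected_loss_def estimator_def G_def A_def Winv_def)

lemma loss_WW: "expected_loss Proj g n p (W ** W') =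
    (\<Sum>ys\<in>{ys. length ys = n}. seq_prob p W ys * (\<Sum>zs\<in>{zs. length zs = n}. kern W' ys zs * G (A' zs)))"
proof -
  have "expected_loss Proj g n p (W ** W') = (\<Sum>zs\<in>{zs. length zs = n}. seq_prob p (W ** W') zs * G (A' zs))"
    by (simp add: expected_loss_def estimator_def G_def A'_def M_def)
  also have "\<dots> = (\<Sum>zs\<in>{zs. length zs = n}. \<Sum>ys\<in>{ys. length ys = n}. seq_prob p W ys * kern W' ys zs * G (A' zs))"
    by (intro sum.cong refl) (simp add: seq_prob_comp sum_distrib_right)
  also have "\<dots> = (\<Sum>ys\<in>{ys. length ys = n}. \<Sum>zs\<in>{zs. length zs = n}. seq_prob p W ys * kern W' ys zs * G (A' zs))"
    by (rule sum.swap)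
  also have "\<dots> = (\<Sum>ys\<in>{ys. length ys = n}. seq_prob p W ys * (\<Sum>zs\<in>{zs. length zs = n}. kern W' ys zs * G (A' zs)))"
    by (simp add: sum_distrib_left mult.assoc)
  finally show ?thesis .
qed

lemma mean_A':
  assumes "length ys \<ge> 1"
  shows "(\<Sum>zs\<in>{zs. length zs = length ys}. kern W' ys zs * (A' zs)$k) = (A ys)$k"
proof -
  have "(\<Sum>zs\<in>{zs. length zs = length ys}. kern W' ys zs * (A' zs)$k)
      = (\<Sum>zs\<in>{zs. length zs = length ys}. kern W' ys zs * sum_list (map (\<lambda>y. M$y$k) zs)) / length ys"
    by (simp add: A'_comp S'_def sum_divide_distrib)
  also have "\<dots> = sum_list (map (\<lambda>y. \<Sum>z\<in>UNIV. W'$y$z * M$z$k) ys) / length ys"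
    by (simp add: kern_mean[OF stW'])
  also have "\<dots> = (A ys)$k" by (simp add: WMe A_comp S_def)
  finally show ?thesis .
qed

lemma jensen:
  assumes "length ys \<ge> 1"
  shows "(\<Sum>zs\<in>{zs. length zs = length ys}. kern W' ys zs * \<psi> k ((A' zs)$k)) \<ge> \<psi> k ((A ys)$k)"
proof -
  have ne: "{zs :: 'k list. length zs = length ys} \<noteq> {}"
    by (metis (mono_tags, lifting) empty_Collect_eq length_replicate)
  have "\<psi> k (\<Sum>zs\<in>{zs. length zs = length ys}. kern W' ys zs *\<^sub>R (A' zs)$k)
      \<le> (\<Sum>zs\<in>{zs. length zs = length ys}. kern W' ys zs * \<psi> k ((A' zs)$k))"
    by (rule convex_on_sum[OF finite_lists_UNIV ne psi(1)]) (auto simp: kern_sum1[OF stW'] kern_nonneg[OF stW'])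
  then show ?thesis using mean_A'[OF assms] by simp
qed

definition "D ys = (\<Sum>zs\<in>{zs. length zs = length ys}. kern W' ys zs * Psi (A' zs)) - Psi (A ys)"
definition "Dk k ys = (\<Sum>zs\<in>{zs. length zs = length ys}. kern W' ys zs * \<psi> k ((A' zs)$k)) - \<psi> k ((A ys)$k)"

lemma D_ge:
  assumes "length ys \<ge> 1"
  shows "D ys \<ge> Dk k0 ys"
proof -
  have "D ys = (\<Sum>k\<in>UNIV. Dk k ys)"
    by (simp add: D_def Dk_def Psi_def sum_distrib_left sum_subtractf) (rule sum.swap)
  also have "\<dots> \<ge> Dk k0 ys"
    by (rule member_le_sum) (use jensen[OF assms] in \<open>auto simp: Dk_def\<close>)
  finally show ?thesis .
qed

definition "badP n = (\<Sum>ys\<in>{ys. length ys = n}. if badA ys then seq_prob p W ys else 0)"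
definition "badP' n = (\<Sum>zs\<in>{zs. length zs = n}. if badA' zs then seq_prob p (W ** W') zs else 0)"

lemma decomp:
  assumes n: "n \<ge> 1"
  shows "expected_loss Proj g n p (W ** W') - expected_loss Proj g n p W
     \<ge> (\<Sum>ys\<in>{ys. length ys = n}. seq_prob p W ys * D ys) - CC * (badP n + badP' n)"
proof -
  let ?L = "{ys :: 'k list. length ys = n}"
  have P0: "0 \<le> seq_prob p W ys" for ys
    unfolding seq_prob_def using r0 by (intro prod_list_nonneg) (auto simp: r_def)
  have low: "(\<Sum>zs\<in>?L. kern W' ys zs * G (A' zs))
       \<ge> (\<Sum>zs\<in>?L. kern W' ys zs * Psi (A' zs)) - CC * (\<Sum>zs\<in>?L. if badA' zs then kern W' ys zs else 0)" for ys
  proof -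
    have "(\<Sum>zs\<in>?L. kern W' ys zs * G (A' zs)) \<ge> (\<Sum>zs\<in>?L. kern W' ys zs * (Psi (A' zs) - CC * (if badA' zs then 1 else 0)))"
      by (intro sum_mono mult_left_mono G_ge) (use n kern_nonneg[OF stW'] in auto)
    also have "(\<Sum>zs\<in>?L. kern W' ys zs * (Psi (A' zs) - CC * (if badA' zs then 1 else 0)))
        = (\<Sum>zs\<in>?L. kern W' ys zs * Psi (A' zs) - CC * (if badA' zs then kern W' ys zs else 0))"
      by (intro sum.cong) (auto simp: algebra_simps)
    also have "\<dots> = (\<Sum>zs\<in>?L. kern W' ys zs * Psi (A' zs)) - CC * (\<Sum>zs\<in>?L. if badA' zs then kern W' ys zs else 0)"
      by (simp only: sum_subtractf sum_distrib_left)
    finally show ?thesis .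
  qed
  have L1a: "(\<Sum>ys\<in>?L. seq_prob p W ys * ((\<Sum>zs\<in>?L. kern W' ys zs * Psi (A' zs)) - CC * (\<Sum>zs\<in>?L. if badA' zs then kern W' ys zs else 0)))
      \<le> expected_loss Proj g n p (W ** W')"
    unfolding loss_WW by (intro sum_mono mult_left_mono low P0)
  have e: "seq_prob p W ys * (\<Sum>zs\<in>?L. if badA' zs then kern W' ys zs else 0)
      = (\<Sum>zs\<in>?L. if badA' zs then seq_prob p W ys * kern W' ys zs else 0)" for ys
    unfolding sum_distrib_left by (intro sum.cong refl) simp
  have "(\<Sum>ys\<in>?L. seq_prob p W ys * ((\<Sum>zs\<in>?L. kern W' ys zs * Psi (A' zs)) - CC * (\<Sum>zs\<in>?L. if badA' zs then kern W' ys zs else 0)))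
     = (\<Sum>ys\<in>?L. seq_prob p W ys * (\<Sum>zs\<in>?L. kern W' ys zs * Psi (A' zs)) - CC * (seq_prob p W ys * (\<Sum>zs\<in>?L. if badA' zs then kern W' ys zs else 0)))"
    by (intro sum.cong refl) (simp add: algebra_simps)
  also have "\<dots> = (\<Sum>ys\<in>?L. seq_prob p W ys * (\<Sum>zs\<in>?L. kern W' ys zs * Psi (A' zs)))
     - CC * (\<Sum>ys\<in>?L. seq_prob p W ys * (\<Sum>zs\<in>?L. if badA' zs then kern W' ys zs else 0))"
    by (simp only: sum_subtractf sum_distrib_left)
  also have "(\<Sum>ys\<in>?L. seq_prob p W ys * (\<Sum>zs\<in>?L. if badA' zs then kern W' ys zs else 0)) = badP' n"
  proof -
    have "(\<Sum>ys\<in>?L. seq_prob p W ys * (\<Sum>zs\<in>?L. if badA' zs then kern W' ys zs else 0))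
        = (\<Sum>ys\<in>?L. \<Sum>zs\<in>?L. if badA' zs then seq_prob p W ys * kern W' ys zs else 0)" unfolding e ..
    also have "\<dots> = (\<Sum>zs\<in>?L. \<Sum>ys\<in>?L. if badA' zs then seq_prob p W ys * kern W' ys zs else 0)" by (rule sum.swap)
    also have "\<dots> = badP' n" unfolding badP'_def
      by (intro sum.cong refl) (auto simp: seq_prob_comp)
    finally show ?thesis .
  qed
  finally have L1b: "(\<Sum>ys\<in>?L. seq_prob p W ys * ((\<Sum>zs\<in>?L. kern W' ys zs * Psi (A' zs)) - CC * (\<Sum>zs\<in>?L. if badA' zs then kern W' ys zs else 0)))
     = (\<Sum>ys\<in>?L. seq_prob p W ys * (\<Sum>zs\<in>?L. kern W' ys zs * Psi (A' zs))) - CC * badP' n" .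
  from L1a L1b have L1: "expected_loss Proj g n p (W ** W') \<ge> (\<Sum>ys\<in>?L. seq_prob p W ys * (\<Sum>zs\<in>?L. kern W' ys zs * Psi (A' zs))) - CC * badP' n"
    by simp
  have "expected_loss Proj g n p W \<le> (\<Sum>ys\<in>?L. seq_prob p W ys * (Psi (A ys) + CC * (if badA ys then 1 else 0)))"
    unfolding loss_W by (intro sum_mono mult_left_mono G_le P0) (use n in auto)
  also have "\<dots> = (\<Sum>ys\<in>?L. seq_prob p W ys * Psi (A ys) + CC * (if badA ys then seq_prob p W ys else 0))"
    by (intro sum.cong refl) (simp add: algebra_simps)
  also have "\<dots> = (\<Sum>ys\<in>?L. seq_prob p W ys * Psi (A ys)) + CC * badP n"
    by (simp only: badP_def sum.distrib sum_distrib_left)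
  finally have L2: "expected_loss Proj g n p W \<le> (\<Sum>ys\<in>?L. seq_prob p W ys * Psi (A ys)) + CC * badP n" .
  have "(\<Sum>ys\<in>?L. seq_prob p W ys * D ys) = (\<Sum>ys\<in>?L. seq_prob p W ys * (\<Sum>zs\<in>?L. kern W' ys zs * Psi (A' zs))) - (\<Sum>ys\<in>?L. seq_prob p W ys * Psi (A ys))"
    by (simp add: D_def right_diff_distrib sum_subtractf)
  then show ?thesis using L1 L2 by (simp add: algebra_simps)
qed

end


lemma sum_list_neg: "sum_list (map (\<lambda>x. - f x) xs) = - sum_list (map f xs :: real list)"
  by (induction xs) auto

context thm5_ctx
begin

lemma seqW: "seq_prob p W ys = prod_list (map (\<lambda>y. r$y) ys)"
  by (simp add: seq_prob_def r_def)
lemma seqWW: "seq_prob p (W ** W') ys = prod_list (map (\<lambda>y. q$y) ys)"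
  by (simp add: seq_prob_def q_def)

lemma eta_pos: "\<eta> > 0" using pmin(1) by (simp add: \<eta>_def)

definition "cbad = crate \<eta> (Bx + 1)"
lemma cbad_pos: "cbad > 0" unfolding cbad_def using eta_pos Bx_bounds(3) by (intro crate_pos) auto

lemma badP_bound: "badP n \<le> 2 * CARD('k) * exp (- cbad * n)"
proof -
  let ?L = "{ys :: 'k list. length ys = n}"
  have P0: "0 \<le> seq_prob p W ys" for ys
    unfolding seq_prob_def using r0 by (intro prod_list_nonneg) (auto simp: r_def)
  have "badP n \<le> (\<Sum>ys\<in>?L. \<Sum>k\<in>UNIV. if \<eta> * n \<le> \<bar>S k ys - n * p$k\<bar> then seq_prob p W ys else 0)"
    unfolding badP_def
  proof (intro sum_mono)
    fix ys :: "'k list" assume "ys \<in> ?L"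
    then have l: "length ys = n" by simp
    show "(if badA ys then seq_prob p W ys else 0) \<le> (\<Sum>k\<in>UNIV. if \<eta> * n \<le> \<bar>S k ys - n * p$k\<bar> then seq_prob p W ys else 0)"
    proof (cases "badA ys")
      case True
      then obtain k where k: "\<eta> * n \<le> \<bar>S k ys - n * p$k\<bar>" using l by (auto simp: badA_def)
      have "seq_prob p W ys = (if \<eta> * n \<le> \<bar>S k ys - n * p$k\<bar> then seq_prob p W ys else 0)" using k by simp
      also have "\<dots> \<le> (\<Sum>k\<in>UNIV. if \<eta> * n \<le> \<bar>S k ys - n * p$k\<bar> then seq_prob p W ys else 0)"
        by (rule member_le_sum) (auto simp: P0)
      finally show ?thesis using True by simp
    next
      case False then show ?thesis by (simp add: sum_nonneg P0)
    qed
  qed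
  also have "\<dots> = (\<Sum>k\<in>UNIV. \<Sum>ys\<in>?L. if \<eta> * n \<le> \<bar>sum_list (map (\<lambda>y. Winv$y$k) ys) - n * p$k\<bar> then prod_list (map (\<lambda>y. r$y) ys) else 0)"
    by (subst sum.swap) (simp add: S_def seqW cong: if_cong)
  also have "\<dots> \<le> (\<Sum>k\<in>(UNIV::'k set). 2 * exp (- cbad * n))"
  proof (intro sum_mono)
    fix k
    show "(\<Sum>ys\<in>?L. if \<eta> * n \<le> \<bar>sum_list (map (\<lambda>y. Winv$y$k) ys) - n * p$k\<bar> then prod_list (map (\<lambda>y. r$y) ys) else 0)
        \<le> 2 * exp (- cbad * n)"
      unfolding cbad_def
    proof (rule iid_dev)
      show "\<And>y. 0 \<le> r$y" by (rule r0)
      show "(\<Sum>y\<in>UNIV. r$y) = 1" by (rule r1)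
      show "(\<Sum>y\<in>UNIV. r$y * Winv$y$k) = p$k" by (rule rW)
      show "\<bar>Winv$y$k - p$k\<bar> \<le> Bx + 1" for y
      proof -
        have "\<bar>Winv$y$k\<bar> \<le> Bx" "p$k \<le> 1" "0 < p$k" using Bx_bounds(1) p_le1 ppos by auto
        then show ?thesis by linarith
      qed
    qed (use eta_pos Bx_bounds(3) in auto)
  qed
  finally show ?thesis by simp
qed

lemma badP'_bound: "badP' n \<le> 2 * CARD('k) * exp (- cbad * n)"
proof -
  let ?L = "{ys :: 'k list. length ys = n}"
  have P0: "0 \<le> seq_prob p (W ** W') ys" for ys
    unfolding seq_prob_def using q0 by (intro prod_list_nonneg) (auto simp: q_def)
  have "badP' n \<le> (\<Sum>ys\<in>?L. \<Sum>k\<in>UNIV. if \<eta> * n \<le> \<bar>S' k ys - n * p$k\<bar> then seq_prob p (W ** W') ys else 0)"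
    unfolding badP'_def
  proof (intro sum_mono)
    fix ys :: "'k list" assume "ys \<in> ?L"
    then have l: "length ys = n" by simp
    show "(if badA' ys then seq_prob p (W ** W') ys else 0) \<le> (\<Sum>k\<in>UNIV. if \<eta> * n \<le> \<bar>S' k ys - n * p$k\<bar> then seq_prob p (W ** W') ys else 0)"
    proof (cases "badA' ys")
      case True
      then obtain k where k: "\<eta> * n \<le> \<bar>S' k ys - n * p$k\<bar>" using l by (auto simp: badA'_def)
      have "seq_prob p (W ** W') ys = (if \<eta> * n \<le> \<bar>S' k ys - n * p$k\<bar> then seq_prob p (W ** W') ys else 0)" using k by simp
      also have "\<dots> \<le> (\<Sum>k\<in>UNIV. if \<eta> * n \<le> \<bar>S' k ys - n * p$k\<bar> then seq_prob p (W ** W') ys else 0)"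
        by (rule member_le_sum) (auto simp: P0)
      finally show ?thesis using True by simp
    next
      case False then show ?thesis by (simp add: sum_nonneg P0)
    qed
  qed
  also have "\<dots> = (\<Sum>k\<in>UNIV. \<Sum>ys\<in>?L. if \<eta> * n \<le> \<bar>sum_list (map (\<lambda>y. M$y$k) ys) - n * p$k\<bar> then prod_list (map (\<lambda>y. q$y) ys) else 0)"
    by (subst sum.swap) (simp add: S'_def seqWW cong: if_cong)
  also have "\<dots> \<le> (\<Sum>k\<in>(UNIV::'k set). 2 * exp (- cbad * n))"
  proof (intro sum_mono)
    fix k
    show "(\<Sum>ys\<in>?L. if \<eta> * n \<le> \<bar>sum_list (map (\<lambda>y. M$y$k) ys) - n * p$k\<bar> then prod_list (map (\<lambda>y. q$y) ys) else 0)
        \<le> 2 * exp (- cbad * n)"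
      unfolding cbad_def
    proof (rule iid_dev)
      show "\<And>y. 0 \<le> q$y" by (rule q0)
      show "(\<Sum>y\<in>UNIV. q$y) = 1" by (rule q1)
      show "(\<Sum>y\<in>UNIV. q$y * M$y$k) = p$k" by (rule qM)
      show "\<bar>M$y$k - p$k\<bar> \<le> Bx + 1" for y
      proof -
        have "\<bar>M$y$k\<bar> \<le> Bx" "p$k \<le> 1" "0 < p$k" using Bx_bounds(2) p_le1 ppos by auto
        then show ?thesis by linarith
      qed
    qed (use eta_pos Bx_bounds(3) in auto)
  qed
  finally show ?thesis by simp
qed

lemma J_pos:
  assumes a: "p$k/2 \<le> a" "a < p$k" "p$k < b" and mm: "a < mm" "mm < b"
  shows "Jdef (\<psi> k) a b mm > 0"
proof -
  define l where "l = (b - mm)/(b - a)"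
  have nz: "b - a \<noteq> 0" using a by simp
  have l: "0 < l" "l < 1" using a mm by (auto simp: l_def divide_simps)
  have l1: "1 - l = (mm - a)/(b - a)" using nz unfolding l_def by (simp add: field_split_simps)
  have lba: "l*(b-a) = b - mm" using nz by (simp add: l_def)
  have mml: "mm = l*a + (1-l)*b" using lba by (simp add: algebra_simps)
  have a0: "0 \<le> a" using a ppos[rule_format, of k] by linarith
  have hs: "h k (l*a + (1-l)*b) < l * h k a + (1-l) * h k b"
    using hstrict a0 a l by blast
  have ge: "p$k/2 \<le> a" "p$k/2 \<le> b" "p$k/2 \<le> mm" using a mm by auto
  have "Jdef (\<psi> k) a b mm = l * \<psi> k a + (1-l) * \<psi> k b - \<psi> k mm"
    unfolding Jdef_def l1 by (simp add: l_def add_divide_distrib)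
  also have "\<dots> = l * h k a + (1-l) * h k b - h k (l*a + (1-l)*b)"
    using psi(2)[OF ge(1)] psi(2)[OF ge(2)] psi(2)[OF ge(3)] mml by simp
  finally show ?thesis using hs by simp
qed

end


context thm5_ctx
begin

lemma tilt_event:
  fixes i0 js k0 :: 'k and \<tau> \<rho> \<delta> :: real and col :: "'k \<Rightarrow> real" and ys :: "'k list"
  assumes w: "W'$i0$js > 0" and tau: "0 < \<tau>" "\<tau> \<le> 1"
    and rho: "0 \<le> \<rho>" "\<rho> \<le> W'$i0$js / (W'$i0$js + \<tau>)"
    and bc: "\<And>y. \<bar>col y\<bar> \<le> Bx" and dl: "\<delta> > 0"
    and ev: "exp (- crate \<delta> (2*Bx) * length ys) \<le> 1/2"
    and imp: "\<And>zs. length zs = length ys \<Longrightarrow>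
        sum_list (map col zs) < sum_list (map (\<lambda>y. \<Sum>z\<in>UNIV. W'$y$z * col z) ys)
           - \<tau> * ((\<Sum>z\<in>UNIV. W'$i0$z * col z) - col js) * count_list ys i0 + \<delta> * length ys \<Longrightarrow> E zs"
  shows "(\<Sum>zs\<in>{zs. length zs = length ys}. if E zs then kern W' ys zs else 0) \<ge> \<rho> ^ length ys / 2"
proof -
  have Bx0: "Bx > 0" using Bx_bounds(3) by simp
  have T: "(\<Sum>zs\<in>{zs. length zs = length ys}.
            if sum_list (map col zs) < sum_list (map (\<lambda>y. \<Sum>z\<in>UNIV. W'$y$z * col z) ys)
               - \<tau> * ((\<Sum>z\<in>UNIV. W'$i0$z * col z) - col js) * count_list ys i0 + \<delta> * length ys
            then kern W' ys zs else 0)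
         \<ge> \<rho> ^ length ys * (1 - exp (- crate \<delta> (2*Bx) * length ys))"
    by (rule tilt[OF stW' w tau rho bc Bx0 dl])
  have "\<rho> ^ length ys / 2 \<le> \<rho> ^ length ys * (1 - exp (- crate \<delta> (2*Bx) * length ys))"
  proof -
    have "\<rho> ^ length ys * (1/2) \<le> \<rho> ^ length ys * (1 - exp (- crate \<delta> (2*Bx) * length ys))"
      using ev rho(1) by (intro mult_left_mono) auto
    then show ?thesis by simp
  qed
  also note T
  also have "(\<Sum>zs\<in>{zs. length zs = length ys}.
            if sum_list (map col zs) < sum_list (map (\<lambda>y. \<Sum>z\<in>UNIV. W'$y$z * col z) ys)
               - \<tau> * ((\<Sum>z\<in>UNIV. W'$i0$z * col z) - col js) * count_list ys i0 + \<delta> * length ys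
            then kern W' ys zs else 0)
      \<le> (\<Sum>zs\<in>{zs. length zs = length ys}. if E zs then kern W' ys zs else 0)"
    by (intro sum_mono) (use imp kern_nonneg[OF stW'] in auto)
  finally show ?thesis .
qed

lemma gap_ys:
  fixes k0 i0 jm jM :: 'k and \<tau> \<rho> \<delta> dd :: real and ys :: "'k list"
  assumes wm: "W'$i0$jm > 0" and wM: "W'$i0$jM > 0"
    and dm: "Winv$i0$k0 - M$jm$k0 \<ge> dd" and dM: "M$jM$k0 - Winv$i0$k0 \<ge> dd" and dd: "dd > 0"
    and tau: "0 < \<tau>" "\<tau> \<le> 1"
    and rho: "0 \<le> \<rho>" "\<rho> \<le> W'$i0$jm / (W'$i0$jm + \<tau>)" "\<rho> \<le> W'$i0$jM / (W'$i0$jM + \<tau>)"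
    and dl: "\<delta> > 0" "4*\<delta> \<le> \<tau> * dd * r$i0 / 2" "\<delta> \<le> p$k0/4"
    and n: "length ys \<ge> 1"
    and typ1: "\<bar>S k0 ys - length ys * p$k0\<bar> < \<delta> * length ys"
    and typ2: "real (count_list ys i0) \<ge> length ys * r$i0 / 2"
    and ev: "exp (- crate \<delta> (2*Bx) * length ys) \<le> 1/2"
  shows "Dk k0 ys \<ge> \<rho> ^ length ys * min (Jdef (\<psi> k0) (p$k0 - 2*\<delta>) (p$k0 + 2*\<delta>) (p$k0 - \<delta>))
                                         (Jdef (\<psi> k0) (p$k0 - 2*\<delta>) (p$k0 + 2*\<delta>) (p$k0 + \<delta>)) / 2"
proof -
  define nn where "nn = length ys"
  have n0: "real nn > 0" using n by (cases ys) (auto simp: nn_def)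
  define p0 where "p0 = p$k0"
  define a where "a = p0 - 2*\<delta>"
  define b where "b = p0 + 2*\<delta>"
  define \<psi>0 where "\<psi>0 = \<psi> k0"
  define m where "m = (A ys)$k0"
  have mdef: "m = S k0 ys / nn" by (simp add: m_def A_comp nn_def)
  have mp: "\<bar>m - p0\<bar> < \<delta>"
  proof -
    have "m - p0 = (S k0 ys - nn * p0) / nn" using n0 by (simp add: mdef field_simps)
    then show ?thesis using typ1 n0 by (simp add: abs_divide divide_less_eq nn_def p0_def)
  qed
  have am: "a < m" "m < b" using mp dl(1) by (auto simp: a_def b_def)
  obtain s where s: "\<forall>x. \<psi>0 m + s * (x - m) \<le> \<psi>0 x"
    using subgrad[OF psi(1)[of k0], of m "m - 1" "m + 1"] by (auto simp: \<psi>0_def)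
  define \<phi> where "\<phi> = (\<lambda>x. \<psi>0 x - (\<psi>0 m + s * (x - m)))"
  have cv0: "convex_on UNIV \<psi>0" by (simp add: \<psi>0_def psi(1))
  note gp = gap_point[OF cv0 am s, folded \<phi>_def]
  let ?L = "{zs :: 'k list. length zs = length ys}"
  define X where "X zs = (A' zs)$k0" for zs
  have ksum: "(\<Sum>zs\<in>?L. kern W' ys zs) = 1" by (rule kern_sum1[OF stW'])
  have kX: "(\<Sum>zs\<in>?L. kern W' ys zs * X zs) = m" unfolding X_def m_def by (rule mean_A'[OF n])
  have Dk_eq: "Dk k0 ys = (\<Sum>zs\<in>?L. kern W' ys zs * \<phi> (X zs))"
  proof -
    have "(\<Sum>zs\<in>?L. kern W' ys zs * \<phi> (X zs))
        = (\<Sum>zs\<in>?L. kern W' ys zs * \<psi>0 (X zs) - ((\<psi>0 m - s * m) * kern W' ys zs + s * (kern W' ys zs * X zs)))"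
      by (intro sum.cong refl) (simp add: \<phi>_def algebra_simps)
    also have "\<dots> = (\<Sum>zs\<in>?L. kern W' ys zs * \<psi>0 (X zs)) - ((\<psi>0 m - s * m) * (\<Sum>zs\<in>?L. kern W' ys zs) + s * (\<Sum>zs\<in>?L. kern W' ys zs * X zs))"
      by (simp only: sum_subtractf sum.distrib sum_distrib_left)
    also have "\<dots> = (\<Sum>zs\<in>?L. kern W' ys zs * \<psi>0 (X zs)) - \<psi>0 m"
      unfolding ksum kX by (simp add: algebra_simps)
    finally show ?thesis by (simp add: Dk_def \<psi>0_def X_def m_def)
  qed
  define Pa where "Pa = (\<Sum>zs\<in>?L. if X zs \<le> a then kern W' ys zs else 0)"
  define Pb where "Pb = (\<Sum>zs\<in>?L. if X zs \<ge> b then kern W' ys zs else 0)"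
  have pt: "\<phi> a * (if X zs \<le> a then kern W' ys zs else 0) + \<phi> b * (if X zs \<ge> b then kern W' ys zs else 0)
      \<le> kern W' ys zs * \<phi> (X zs)" for zs
  proof -
    have k0': "0 \<le> kern W' ys zs" by (rule kern_nonneg[OF stW'])
    consider "X zs \<le> a" | "X zs \<ge> b" | "a < X zs \<and> X zs < b" by linarith
    then show ?thesis
    proof cases
      case 1
      then have "\<not> X zs \<ge> b" using am by linarith
      have "\<phi> a \<le> \<phi> (X zs)" using gp(2)[OF 1] by (simp add: \<phi>_def)
      then have "\<phi> a * kern W' ys zs \<le> \<phi> (X zs) * kern W' ys zs" using k0' by (rule mult_right_mono)
      then show ?thesis using 1 \<open>\<not> X zs \<ge> b\<close> by (simp add: mult.commute)
    next
      case 2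
      then have "\<not> X zs \<le> a" using am by linarith
      have "\<phi> b \<le> \<phi> (X zs)" using gp(3)[OF 2] by (simp add: \<phi>_def)
      then have "\<phi> b * kern W' ys zs \<le> \<phi> (X zs) * kern W' ys zs" using k0' by (rule mult_right_mono)
      then show ?thesis using 2 \<open>\<not> X zs \<le> a\<close> by (simp add: mult.commute)
    next
      case 3
      have "0 \<le> \<phi> (X zs)" using gp(1)[of "X zs"] by (simp add: \<phi>_def)
      then show ?thesis using 3 k0' by simp
    qed
  qed
  have sumpt: "\<phi> a * Pa + \<phi> b * Pb \<le> Dk k0 ys"
    unfolding Dk_eq Pa_def Pb_def sum_distrib_left sum.distrib[symmetric] by (intro sum_mono pt)
  have Wk: "(\<lambda>y. \<Sum>z\<in>UNIV. W'$y$z * M$z$k0) = (\<lambda>y. Winv$y$k0)" by (rule ext) (rule WMe)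
  have Wkn: "(\<lambda>y. \<Sum>z\<in>UNIV. W'$y$z * - M$z$k0) = (\<lambda>y. - Winv$y$k0)"
    by (rule ext) (simp add: WMe[symmetric] sum_negf)
  have cnt: "\<tau> * dd * (nn * r$i0 / 2) \<le> \<tau> * dd * count_list ys i0"
    using typ2 tau dd by (intro mult_left_mono) (auto simp: nn_def)
  have fourd: "4 * \<delta> * nn \<le> \<tau> * dd * (nn * r$i0 / 2)"
  proof -
    have "4 * \<delta> * nn \<le> (\<tau> * dd * r$i0 / 2) * nn" using dl(2) n0 by (intro mult_right_mono) auto
    then show ?thesis by (simp add: algebra_simps)
  qed
  have Pa_ge: "Pa \<ge> \<rho> ^ length ys / 2"
    unfolding Pa_def
  proof (rule tilt_event[OF wm tau rho(1) rho(2) _ dl(1) ev])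
    show "\<bar>M$y$k0\<bar> \<le> Bx" for y by (rule Bx_bounds(2))
  next
    fix zs :: "'k list" assume l: "length zs = length ys"
      and c: "sum_list (map (\<lambda>z. M$z$k0) zs) < sum_list (map (\<lambda>y. \<Sum>z\<in>UNIV. W'$y$z * M$z$k0) ys)
           - \<tau> * ((\<Sum>z\<in>UNIV. W'$i0$z * M$z$k0) - M$jm$k0) * count_list ys i0 + \<delta> * length ys"
    have c2: "S' k0 zs < S k0 ys - \<tau> * (Winv$i0$k0 - M$jm$k0) * count_list ys i0 + \<delta> * nn"
      using c by (simp add: Wk WMe S_def S'_def nn_def)
    have "\<tau> * dd * count_list ys i0 \<le> \<tau> * (Winv$i0$k0 - M$jm$k0) * count_list ys i0"
      using dm tau by (intro mult_right_mono mult_left_mono) auto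
    then have "S' k0 zs < S k0 ys - 3 * \<delta> * nn" using c2 cnt fourd by linarith
    then have "S' k0 zs / nn < S k0 ys / nn - 3 * \<delta>" using n0 by (simp add: field_simps)
    then have "X zs < m - 3 * \<delta>" by (simp add: X_def A'_comp l mdef nn_def)
    then show "X zs \<le> a" using mp by (simp add: a_def)
  qed
  have Pb_ge: "Pb \<ge> \<rho> ^ length ys / 2"
    unfolding Pb_def
  proof (rule tilt_event[OF wM tau rho(1) rho(3) _ dl(1) ev])
    show "\<bar>- M$y$k0\<bar> \<le> Bx" for y using Bx_bounds(2) by simp
  next
    fix zs :: "'k list" assume l: "length zs = length ys"
      and c: "sum_list (map (\<lambda>z. - M$z$k0) zs) < sum_list (map (\<lambda>y. \<Sum>z\<in>UNIV. W'$y$z * - M$z$k0) ys)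
           - \<tau> * ((\<Sum>z\<in>UNIV. W'$i0$z * - M$z$k0) - - M$jM$k0) * count_list ys i0 + \<delta> * length ys"
    have e1: "(\<Sum>z\<in>UNIV. W'$i0$z * - M$z$k0) = - Winv$i0$k0" by (simp add: WMe[symmetric] sum_negf)
    have c2: "- S' k0 zs < - S k0 ys - \<tau> * (M$jM$k0 - Winv$i0$k0) * count_list ys i0 + \<delta> * nn"
      using c unfolding Wkn e1 by (simp add: sum_list_neg S_def S'_def nn_def algebra_simps)
    have "\<tau> * dd * count_list ys i0 \<le> \<tau> * (M$jM$k0 - Winv$i0$k0) * count_list ys i0"
      using dM tau by (intro mult_right_mono mult_left_mono) auto
    then have "S' k0 zs > S k0 ys + 3 * \<delta> * nn" using c2 cnt fourd by linarith
    then have "(S k0 ys + 3 * \<delta> * nn) / nn < S' k0 zs / nn" using n0 by (intro divide_strict_right_mono) auto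
    moreover have "(S k0 ys + 3 * \<delta> * nn) / nn = S k0 ys / nn + 3 * \<delta>" using n0 by (simp add: add_divide_distrib)
    ultimately have "S' k0 zs / nn > S k0 ys / nn + 3 * \<delta>" by simp
    then have "X zs > m + 3 * \<delta>" by (simp add: X_def A'_comp l mdef nn_def)
    then show "X zs \<ge> b" using mp by (simp add: b_def)
  qed
  have phi0: "0 \<le> \<phi> a" "0 \<le> \<phi> b" using gp(1) by (auto simp: \<phi>_def)
  have "\<rho> ^ length ys / 2 * (\<phi> a + \<phi> b) \<le> \<phi> a * Pa + \<phi> b * Pb"
    using mult_left_mono[OF Pa_ge phi0(1)] mult_left_mono[OF Pb_ge phi0(2)] by (simp add: algebra_simps)
  moreover have "Jdef \<psi>0 a b m \<le> \<phi> a + \<phi> b" using gp(4) by (simp add: \<phi>_def)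
  moreover have "min (Jdef \<psi>0 a b (p0 - \<delta>)) (Jdef \<psi>0 a b (p0 + \<delta>)) \<le> Jdef \<psi>0 a b m"
    by (rule Jdef_min[OF cv0]) (use am mp dl(1) in auto)
  ultimately have "\<rho> ^ length ys / 2 * min (Jdef \<psi>0 a b (p0 - \<delta>)) (Jdef \<psi>0 a b (p0 + \<delta>)) \<le> Dk k0 ys"
    using sumpt rho(1)
    by (smt (verit, ccfv_SIG) divide_nonneg_nonneg mult_left_mono zero_le_power)
  then show ?thesis by (simp add: \<psi>0_def a_def b_def p0_def algebra_simps)
qed

end


context thm5_ctx
begin

lemma sumP1: "(\<Sum>ys\<in>{ys. length ys = n}. seq_prob p W ys) = 1"
proof -
  have "(\<Sum>ys\<in>{ys. length ys = n}. seq_prob p W ys)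
      = (\<Sum>ys\<in>{ys. length ys = length (replicate n ())}. prod_list (map2 (\<lambda>u y. r$y) (replicate n ()) ys))"
    by (intro sum.cong) (auto simp: seqW map2_replicate)
  also have "\<dots> = prod_list (map (\<lambda>z. \<Sum>y\<in>UNIV. r$y) (replicate n ()))"
    by (rule sum_prod_map2)
  also have "\<dots> = 1" by (simp add: r1 prod_list_map_const_one)
  finally show ?thesis .
qed

lemma ex_side:
  fixes i0 j1 j2 k0 :: 'k and sg :: real
  assumes j12: "W'$i0$j1 > 0" "W'$i0$j2 > 0" "M$j1$k0 \<noteq> M$j2$k0" and sg: "sg = 1 \<or> sg = -1"
  shows "\<exists>j. W'$i0$j > 0 \<and> sg * M$j$k0 < sg * Winv$i0$k0"
proof (rule ccontr)
  assume neg: "\<not> ?thesis"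
  have ge: "sg * Winv$i0$k0 \<le> sg * M$j$k0" if "W'$i0$j > 0" for j
    using neg that by (meson not_less)
  have W0: "\<And>j. 0 \<le> W'$i0$j" using stW' by (simp add: row_stochastic_def)
  have nn: "\<forall>j\<in>UNIV. 0 \<le> W'$i0$j * (sg * M$j$k0 - sg * Winv$i0$k0)"
  proof
    fix j
    show "0 \<le> W'$i0$j * (sg * M$j$k0 - sg * Winv$i0$k0)"
    proof (cases "W'$i0$j > 0")
      case True then show ?thesis using ge[OF True] by simp
    next
      case False then have "W'$i0$j = 0" using W0[of j] by simp
      then show ?thesis by simp
    qed
  qed
  have "(\<Sum>j\<in>UNIV. W'$i0$j * (sg * M$j$k0 - sg * Winv$i0$k0))
      = sg * (\<Sum>j\<in>UNIV. W'$i0$j * M$j$k0) - sg * Winv$i0$k0 * (\<Sum>j\<in>UNIV. W'$i0$j)"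
    by (simp add: right_diff_distrib sum_subtractf sum_distrib_left sum_distrib_right algebra_simps)
  also have "\<dots> = 0" using WMe[of i0 k0] row_stoch_sum[OF stW', of i0] by simp
  finally have "\<forall>j\<in>UNIV. W'$i0$j * (sg * M$j$k0 - sg * Winv$i0$k0) = 0"
    using nn by (simp add: sum_nonneg_eq_0_iff)
  then have z1: "W'$i0$j1 * (sg * M$j1$k0 - sg * Winv$i0$k0) = 0" "W'$i0$j2 * (sg * M$j2$k0 - sg * Winv$i0$k0) = 0"
    by auto
  have sg0: "sg \<noteq> 0" using sg by auto
  have "sg * (M$j1$k0 - Winv$i0$k0) = 0" "sg * (M$j2$k0 - Winv$i0$k0) = 0"
    using z1 j12(1,2) by (auto simp: algebra_simps)
  then have "M$j1$k0 = Winv$i0$k0" "M$j2$k0 = Winv$i0$k0" using sg0 by auto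
  then show False using j12(3) by simp
qed

lemma main_ev: "\<forall>\<^sub>F n in sequentially. expected_loss Proj g n p (W ** W') > expected_loss Proj g n p W"
proof -
  obtain i0 j1 j2 where j12: "j1 \<noteq> j2" "W'$i0$j1 > 0" "W'$i0$j2 > 0"
    using two_support[OF stW' invW' np] by blast
  have invM: "invertible M" unfolding M_def by (rule invertible_minv[OF invWW])
  obtain k0 where k0: "M$j1$k0 \<noteq> M$j2$k0" using rows_differ[OF invM j12(1)] by blast
  obtain jm where jm: "W'$i0$jm > 0" "M$jm$k0 < Winv$i0$k0"
    using ex_side[OF j12(2,3) k0, of 1] by auto
  obtain jM where jM: "W'$i0$jM > 0" "M$jM$k0 > Winv$i0$k0"
    using ex_side[OF j12(2,3) k0, of "-1"] by auto
  define dd where "dd = min (Winv$i0$k0 - M$jm$k0) (M$jM$k0 - Winv$i0$k0)"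
  have dd: "dd > 0" "Winv$i0$k0 - M$jm$k0 \<ge> dd" "M$jM$k0 - Winv$i0$k0 \<ge> dd"
    using jm jM by (auto simp: dd_def)
  define ri where "ri = r$i0"
  have ri: "0 < ri" "ri \<le> 1"
  proof -
    show "0 < ri" unfolding ri_def r_def by (rule col_pos[OF stW invW ppos])
    have "r$i0 \<le> (\<Sum>y\<in>UNIV. r$y)" by (rule member_le_sum) (auto simp: r0)
    then show "ri \<le> 1" using r1 by (simp add: ri_def)
  qed
  define c where "c = cbad"
  have c: "c > 0" using cbad_pos by (simp add: c_def)
  define wmin where "wmin = min (W'$i0$jm) (W'$i0$jM)"
  have wmin: "wmin > 0" using jm jM by (simp add: wmin_def)
  define \<tau> where "\<tau> = min 1 (wmin * (exp (c/2) - 1))"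
  have e1: "exp (c/2) > 1" using c by simp
  have tau: "0 < \<tau>" "\<tau> \<le> 1" using wmin e1 by (auto simp: \<tau>_def)
  define \<rho> where "\<rho> = exp (- (c/2))"
  have rho0: "0 \<le> \<rho>" by (simp add: \<rho>_def)
  have rhow: "\<rho> \<le> w / (w + \<tau>)" if w: "w \<ge> wmin" for w
  proof -
    have w0: "w > 0" using w wmin by simp
    have "\<tau> \<le> wmin * (exp (c/2) - 1)" by (simp add: \<tau>_def)
    also have "\<dots> \<le> w * (exp (c/2) - 1)" using w e1 by (intro mult_right_mono) auto
    finally have "w + \<tau> \<le> w * exp (c/2)" by (simp add: algebra_simps)
    then have "\<rho> * (w + \<tau>) \<le> \<rho> * (w * exp (c/2))" using rho0 by (rule mult_left_mono)
    also have "\<dots> = w" by (simp add: \<rho>_def exp_minus field_simps)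
    finally show ?thesis using w0 tau by (simp add: le_divide_eq)
  qed
  have rho_m: "\<rho> \<le> W'$i0$jm / (W'$i0$jm + \<tau>)" by (rule rhow) (simp add: wmin_def)
  have rho_M: "\<rho> \<le> W'$i0$jM / (W'$i0$jM + \<tau>)" by (rule rhow) (simp add: wmin_def)
  define p0 where "p0 = p$k0"
  have p0: "0 < p0" using ppos by (simp add: p0_def)
  define \<delta> where "\<delta> = min (\<tau> * dd * ri / 8) (p0/4)"
  have dl: "\<delta> > 0" "4*\<delta> \<le> \<tau> * dd * r$i0 / 2" "\<delta> \<le> p$k0/4"
    using tau dd ri p0 by (auto simp: \<delta>_def ri_def p0_def)
  define J where "J = min (Jdef (\<psi> k0) (p$k0 - 2*\<delta>) (p$k0 + 2*\<delta>) (p$k0 - \<delta>))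
                          (Jdef (\<psi> k0) (p$k0 - 2*\<delta>) (p$k0 + 2*\<delta>) (p$k0 + \<delta>))"
  have J: "J > 0" unfolding J_def
    using J_pos[of k0 "p$k0 - 2*\<delta>" "p$k0 + 2*\<delta>" "p$k0 - \<delta>"] J_pos[of k0 "p$k0 - 2*\<delta>" "p$k0 + 2*\<delta>" "p$k0 + \<delta>"] dl
    by auto
  define c1 where "c1 = crate \<delta> (Bx + 1)"
  define c2 where "c2 = crate (ri/2) 1"
  define c' where "c' = crate \<delta> (2*Bx)"
  have cpos: "c1 > 0" "c2 > 0" "c' > 0"
    using dl ri Bx_bounds(3) by (auto simp: c1_def c2_def c'_def intro!: crate_pos)
  define K where "K = real CARD('k)"
  have K: "K \<ge> 1" by (simp add: K_def)
  have CC1: "CC \<ge> 1" by (rule CC_pos)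
  have evs: "\<forall>\<^sub>F n in sequentially. exp (- c' * real n) < 1/2 \<and> exp (- c1 * real n) < 1/8
      \<and> exp (- c2 * real n) < 1/8 \<and> exp (- (c/2) * real n) < J / (16 * K * CC) \<and> n \<ge> 1"
  proof -
    have a1: "\<forall>\<^sub>F n in sequentially. exp (- c' * real n) < 1/2" by (rule ev_exp[OF cpos(3)]) simp
    have a2: "\<forall>\<^sub>F n in sequentially. exp (- c1 * real n) < 1/8" by (rule ev_exp[OF cpos(1)]) simp
    have a3: "\<forall>\<^sub>F n in sequentially. exp (- c2 * real n) < 1/8" by (rule ev_exp[OF cpos(2)]) simp
    have a4: "\<forall>\<^sub>F n in sequentially. exp (- (c/2) * real n) < J / (16 * K * CC)"
      by (rule ev_exp) (use c J K CC1 in auto)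
    have a5: "\<forall>\<^sub>F n in sequentially. n \<ge> (1::nat)" by (rule eventually_ge_at_top)
    show ?thesis using eventually_conj[OF a1 eventually_conj[OF a2 eventually_conj[OF a3 eventually_conj[OF a4 a5]]]] .
  qed
  show ?thesis
  proof (rule eventually_mono[OF evs], elim conjE)
    fix n :: nat
    assume ev1: "exp (- c' * real n) < 1/2" and ev2: "exp (- c1 * real n) < 1/8"
      and ev3: "exp (- c2 * real n) < 1/8" and ev4: "exp (- (c/2) * real n) < J / (16 * K * CC)" and n1: "n \<ge> 1"
    let ?L = "{ys :: 'k list. length ys = n}"
    define tgood where "tgood ys = (\<bar>S k0 ys - n * p$k0\<bar> < \<delta> * n \<and>
        \<not> (ri/2 * n \<le> \<bar>sum_list (map (\<lambda>y. if y = i0 then 1 else 0) ys) - n * ri\<bar>))" for ys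
    have P0: "0 \<le> seq_prob p W ys" for ys
      unfolding seq_prob_def using r0 by (intro prod_list_nonneg) (auto simp: r_def)
    have Dge: "seq_prob p W ys * D ys \<ge> (if tgood ys then seq_prob p W ys else 0) * (\<rho> ^ n * J / 2)" if ys: "ys \<in> ?L" for ys
    proof -
      have l: "length ys = n" using ys by simp
      have l1: "length ys \<ge> 1" using l n1 by simp
      have Dk0: "0 \<le> Dk k0 ys" using jensen[OF l1, of k0] by (simp add: Dk_def)
      have DD: "D ys \<ge> Dk k0 ys" by (rule D_ge[OF l1])
      show ?thesis
      proof (cases "tgood ys")
        case True
        have t1: "\<bar>S k0 ys - length ys * p$k0\<bar> < \<delta> * length ys" using True l by (simp add: tgood_def)
        have "\<not> (ri/2 * n \<le> \<bar>sum_list (map (\<lambda>y. if y = i0 then 1 else 0) ys) - n * ri\<bar>)"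
          using True by (simp add: tgood_def)
        then have "\<bar>real (count_list ys i0) - n * ri\<bar> < ri/2 * n" by (simp add: sum_list_ind not_le)
        then have "n * ri - real (count_list ys i0) < ri/2 * n" by linarith
        then have t2: "real (count_list ys i0) \<ge> length ys * r$i0 / 2"
          using l by (simp add: ri_def algebra_simps)
        have ev: "exp (- crate \<delta> (2*Bx) * length ys) \<le> 1/2" using ev1 l by (simp add: c'_def)
        have "Dk k0 ys \<ge> \<rho> ^ length ys * J / 2"
          using gap_ys[OF jm(1) jM(1) dd(2) dd(3) dd(1) tau rho0 rho_m rho_M dl l1 t1 t2 ev] by (simp add: J_def)
        then have "D ys \<ge> \<rho> ^ n * J / 2" using DD l by simp
        then have "seq_prob p W ys * (\<rho> ^ n * J / 2) \<le> seq_prob p W ys * D ys"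
          using P0[of ys] by (rule mult_left_mono)
        then show ?thesis using True by (simp add: mult.commute)
      next
        case False
        then show ?thesis using P0[of ys] Dk0 DD by simp
      qed
    qed
    have ntyp: "(\<Sum>ys\<in>?L. if \<not> tgood ys then seq_prob p W ys else 0) \<le> 1/2"
    proof -
      have "(\<Sum>ys\<in>?L. if \<not> tgood ys then seq_prob p W ys else 0)
          \<le> (\<Sum>ys\<in>?L. (if \<delta> * n \<le> \<bar>sum_list (map (\<lambda>y. Winv$y$k0) ys) - n * p$k0\<bar> then prod_list (map (\<lambda>y. r$y) ys) else 0)
              + (if ri/2 * n \<le> \<bar>sum_list (map (\<lambda>y. if y = i0 then 1 else 0) ys) - n * ri\<bar> then prod_list (map (\<lambda>y. r$y) ys) else 0))"
        by (intro sum_mono) (use P0 in \<open>auto simp: tgood_def S_def seqW not_less\<close>)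
      also have "\<dots> \<le> 2 * exp (- c1 * n) + 2 * exp (- c2 * n)"
        unfolding sum.distrib
      proof (intro add_mono)
        show "(\<Sum>ys\<in>?L. if \<delta> * n \<le> \<bar>sum_list (map (\<lambda>y. Winv$y$k0) ys) - n * p$k0\<bar> then prod_list (map (\<lambda>y. r$y) ys) else 0)
            \<le> 2 * exp (- c1 * n)"
          unfolding c1_def
        proof (rule iid_dev)
          show "\<bar>Winv$y$k0 - p$k0\<bar> \<le> Bx + 1" for y
          proof -
            have "\<bar>Winv$y$k0\<bar> \<le> Bx" "p$k0 \<le> 1" "0 < p$k0" using Bx_bounds(1) p_le1 ppos by auto
            then show ?thesis by linarith
          qed
        qed (use r0 r1 rW dl Bx_bounds(3) in auto)
        show "(\<Sum>ys\<in>?L. if ri/2 * n \<le> \<bar>sum_list (map (\<lambda>y. if y = i0 then 1 else 0) ys) - n * ri\<bar> then prod_list (map (\<lambda>y. r$y) ys) else 0)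
            \<le> 2 * exp (- c2 * n)"
          unfolding c2_def
        proof (rule iid_dev)
          show "(\<Sum>y\<in>UNIV. r$y * (if y = i0 then 1 else 0)) = ri"
            by (simp add: ri_def if_distrib cong: if_cong)
          show "\<bar>(if y = i0 then 1 else 0) - ri\<bar> \<le> 1" for y using ri by auto
        qed (use r0 r1 ri in auto)
      qed
      also have "\<dots> \<le> 1/2" using ev2 ev3 by linarith
      finally show ?thesis .
    qed
    have tgood_ge: "(\<Sum>ys\<in>?L. if tgood ys then seq_prob p W ys else 0) \<ge> 1/2"
    proof -
      have "(\<Sum>ys\<in>?L. if tgood ys then seq_prob p W ys else 0) + (\<Sum>ys\<in>?L. if \<not> tgood ys then seq_prob p W ys else 0)
          = (\<Sum>ys\<in>?L. seq_prob p W ys)" by (simp add: sum.distrib[symmetric] if_distrib cong: if_cong) (intro sum.cong, auto)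
      then show ?thesis using sumP1[of n] ntyp by linarith
    qed
    define u where "u = exp (- (c/2) * real n)"
    have u0: "u > 0" by (simp add: u_def)
    have rhon: "\<rho> ^ n = u" by (simp add: \<rho>_def u_def exp_of_nat_mult[symmetric] mult.commute)
    have ecn: "exp (- c * real n) = u * u" by (simp add: u_def exp_add[symmetric])
    have gap: "(\<Sum>ys\<in>?L. seq_prob p W ys * D ys) \<ge> u * J / 4"
    proof -
      have "(\<Sum>ys\<in>?L. seq_prob p W ys * D ys) \<ge> (\<Sum>ys\<in>?L. (if tgood ys then seq_prob p W ys else 0) * (\<rho> ^ n * J / 2))"
        by (intro sum_mono Dge)
      also have "(\<Sum>ys\<in>?L. (if tgood ys then seq_prob p W ys else 0) * (\<rho> ^ n * J / 2))
          = (\<Sum>ys\<in>?L. if tgood ys then seq_prob p W ys else 0) * (\<rho> ^ n * J / 2)"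
        by (simp add: sum_distrib_right)
      finally have "(\<Sum>ys\<in>?L. seq_prob p W ys * D ys) \<ge> (\<Sum>ys\<in>?L. if tgood ys then seq_prob p W ys else 0) * (u * J / 2)"
        by (simp add: rhon)
      moreover have "(\<Sum>ys\<in>?L. if tgood ys then seq_prob p W ys else 0) * (u * J / 2) \<ge> 1/2 * (u * J / 2)"
        using tgood_ge u0 J by (intro mult_right_mono) auto
      ultimately have "(\<Sum>ys\<in>?L. seq_prob p W ys * D ys) \<ge> 1/2 * (u * J / 2)" by linarith
      then show ?thesis by simp
    qed
    have b1: "badP n \<le> 2 * K * exp (- c * real n)" using badP_bound[of n] unfolding K_def c_def by simp
    have b2: "badP' n \<le> 2 * K * exp (- c * real n)" using badP'_bound[of n] unfolding K_def c_def by simp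
    have bads: "badP n + badP' n \<le> 4 * K * (u * u)"
      using b1 b2 unfolding ecn by linarith
    have "expected_loss Proj g n p (W ** W') - expected_loss Proj g n p W \<ge> u * J / 4 - CC * (4 * K * (u * u))"
    proof -
      have "CC * (badP n + badP' n) \<le> CC * (4 * K * (u * u))" using bads CC1 by (intro mult_left_mono) auto
      then show ?thesis using decomp[OF n1] gap by linarith
    qed
    moreover have "u * J / 4 - CC * (4 * K * (u * u)) > 0"
    proof -
      have "u < J / (16 * K * CC)" using ev4 by (simp add: u_def)
      then have "u * (16 * K * CC) < J" using K CC1 by (simp add: less_divide_eq)
      then have "u * (u * (16 * K * CC)) < u * J" using u0 by simp
      then show ?thesis by (simp add: algebra_simps)
    qed
    ultimately show "expected_loss Proj g n p W < expected_loss Proj g n p (W ** W')" by linarith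
  qed
qed

end


lemma general_thm:
  fixes p :: "real^'k::finite" and W W' :: "real^'k^'k" and Proj :: "real^'k \<Rightarrow> real^'k"
    and g :: "real^'k \<Rightarrow> real^'k \<Rightarrow> real" and h :: "'k \<Rightarrow> real \<Rightarrow> real"
  assumes "p \<in> prob_simplex" "\<forall>k. 0 < p$k"
    "row_stochastic W" "invertible W" "row_stochastic W'" "invertible W'"
    "\<not> permutation_matrix W'" "is_simplex_proj Proj"
    "\<forall>q. g q p = (\<Sum>k\<in>UNIV. h k (q$k))"
    "\<forall>k. convex_on {0..} (h k)"
    "\<forall>k a b l. 0 \<le> a \<longrightarrow> a < p$k \<longrightarrow> p$k < b \<longrightarrow> 0 < l \<longrightarrow> l < 1 \<longrightarrow>
                     h k (l*a + (1-l)*b) < l * h k a + (1-l) * h k b"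
  shows "\<forall>\<^sub>F n in sequentially. expected_loss Proj g n p (W ** W') > expected_loss Proj g n p W"
proof -
  have "thm5_ctx p W W' Proj g h" unfolding thm5_ctx_def using assms by blast
  then show ?thesis by (rule thm5_ctx.main_ev)
qed

lemma sq_identity:
  fixes x y c t :: real
  shows "(1-t) * (x - c)^2 + t * (y - c)^2 - ((1-t)*x + t*y - c)^2 = t * (1-t) * (x - y)^2"
  by (simp add: power2_eq_square algebra_simps)

lemma conv_sq: "convex_on {0..} (\<lambda>x::real. (x - c)^2)"
proof (rule convex_onI)
  fix t x y :: real assume t: "0 < t" "t < 1"
  have "0 \<le> t * (1-t) * (x - y)^2" using t by simp
  then show "((1 - t) *\<^sub>R x + t *\<^sub>R y - c)^2 \<le> (1 - t) * (x - c)^2 + t * (y - c)^2"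
    using sq_identity[of t x c y] by simp
qed (simp add: convex_real_interval)

lemma strict_sq:
  fixes a b c l :: real
  assumes "a < c" "c < b" "0 < l" "l < 1"
  shows "(l*a + (1-l)*b - c)^2 < l * (a - c)^2 + (1-l) * (b - c)^2"
proof -
  have "0 < (1-l) * l * (a - b)^2" using assms by simp
  then show ?thesis using sq_identity[of "1-l" a c b] by (simp add: algebra_simps)
qed

lemma conv_abs: "convex_on {0..} (\<lambda>x::real. \<bar>x - c\<bar>)"
proof (rule convex_onI)
  fix t x y :: real assume t: "0 < t" "t < 1"
  have "(1 - t) * x + t * y - c = (1-t) * (x - c) + t * (y - c)" by (simp add: algebra_simps)
  also have "\<bar>\<dots>\<bar> \<le> \<bar>(1-t) * (x - c)\<bar> + \<bar>t * (y - c)\<bar>" by (rule abs_triangle_ineq)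
  also have "\<dots> = (1-t) * \<bar>x - c\<bar> + t * \<bar>y - c\<bar>" using t by (simp add: abs_mult)
  finally show "\<bar>(1 - t) *\<^sub>R x + t *\<^sub>R y - c\<bar> \<le> (1 - t) * \<bar>x - c\<bar> + t * \<bar>y - c\<bar>" by simp
qed (simp add: convex_real_interval)

lemma strict_abs:
  fixes a b c l :: real
  assumes "a < c" "c < b" "0 < l" "l < 1"
  shows "\<bar>l*a + (1-l)*b - c\<bar> < l * \<bar>a - c\<bar> + (1-l) * \<bar>b - c\<bar>"
proof -
  have e: "l*a + (1-l)*b - c = l * (a - c) + (1-l) * (b - c)" by (simp add: algebra_simps)
  have u: "l * (a - c) < 0" using assms by (simp add: mult_pos_neg)
  have v: "(1-l) * (b - c) > 0" using assms by simp
  have "\<bar>l * (a - c) + (1-l) * (b - c)\<bar> < - (l * (a - c)) + (1-l) * (b - c)" using u v by linarith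
  also have "\<dots> = l * \<bar>a - c\<bar> + (1-l) * \<bar>b - c\<bar>" using assms by (simp add: algebra_simps)
  finally show ?thesis unfolding e .
qed

lemma conv_fdiv:
  fixes f :: "real \<Rightarrow> real" and c :: real
  assumes f: "convex_on {0..} f" and c: "c > 0"
  shows "convex_on {0..} (\<lambda>x. c * f (x / c))"
proof (rule convex_onI)
  fix t x y :: real assume t: "0 < t" "t < 1" and x: "x \<in> {0..}" and y: "y \<in> {0..}"
  have "f ((1-t) *\<^sub>R (x/c) + t *\<^sub>R (y/c)) \<le> (1-t) * f (x/c) + t * f (y/c)"
    using convex_onD[OF f, of t "x/c" "y/c"] t x y c by simp
  moreover have "((1 - t) *\<^sub>R x + t *\<^sub>R y) / c = (1-t) *\<^sub>R (x/c) + t *\<^sub>R (y/c)"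
    by (simp add: add_divide_distrib)
  ultimately have "f (((1 - t) *\<^sub>R x + t *\<^sub>R y) / c) \<le> (1-t) * f (x/c) + t * f (y/c)" by simp
  then have "c * f (((1 - t) *\<^sub>R x + t *\<^sub>R y) / c) \<le> c * ((1-t) * f (x/c) + t * f (y/c))"
    using c by (intro mult_left_mono) auto
  then show "c * f (((1 - t) *\<^sub>R x + t *\<^sub>R y) / c) \<le> (1 - t) * (c * f (x / c)) + t * (c * f (y / c))"
    by (simp add: algebra_simps)
qed (simp add: convex_real_interval)

lemma strict_fdiv:
  fixes f :: "real \<Rightarrow> real" and c a b l :: real
  assumes f: "strictly_convex_at_one f" and c: "c > 0" and ab: "0 \<le> a" "a < c" "c < b" and l: "0 < l" "l < 1"
  shows "c * f ((l*a + (1-l)*b) / c) < l * (c * f (a/c)) + (1-l) * (c * f (b/c))"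
proof -
  define e where "e = 1 - a/c"
  define e' where "e' = b/c - 1"
  have e: "0 < e" "e \<le> 1" using ab c by (auto simp: e_def divide_simps)
  have e': "0 < e'" using ab c by (auto simp: e'_def divide_simps)
  have s: "f (l * (1 - e) + (1 - l) * (1 + e')) < l * f (1 - e) + (1 - l) * f (1 + e')"
    using f e e' l unfolding strictly_convex_at_one_def by blast
  have a1: "1 - e = a/c" by (simp add: e_def)
  have b1: "1 + e' = b/c" by (simp add: e'_def)
  have m1: "l * (a/c) + (1 - l) * (b/c) = (l*a + (1-l)*b) / c"
    by (simp add: add_divide_distrib)
  have "f ((l*a + (1-l)*b) / c) < l * f (a/c) + (1 - l) * f (b/c)" using s unfolding a1 b1 m1 .
  then have "c * f ((l*a + (1-l)*b) / c) < c * (l * f (a/c) + (1 - l) * f (b/c))"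
    using c by simp
  then show ?thesis by (simp add: algebra_simps)
qed

theorem theorem5:
  fixes p :: "real ^ 'k::finite"
    and W W' :: "real ^ 'k ^ 'k"
    and Proj :: "real ^ 'k \<Rightarrow> real ^ 'k"
  assumes "CARD('k) \<ge> 2"
    and "p \<in> prob_simplex" and "\<forall>k. 0 < p $ k"
    and "row_stochastic W" and "invertible W"
    and "row_stochastic W'" and "invertible W'"
    and "\<not> permutation_matrix W'"
    and "is_simplex_proj Proj"
  shows "(\<forall>f. convex_on {0..} f \<and> f 1 = 0 \<and> strictly_convex_at_one f \<longrightarrow>
            (\<forall>\<^sub>F n in sequentially.
               expected_loss Proj (fdiv_loss f) n p (W ** W') > expected_loss Proj (fdiv_loss f) n p W))
       \<and> (\<forall>\<^sub>F n in sequentially.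
               expected_loss Proj mse_loss n p (W ** W') > expected_loss Proj mse_loss n p W)
       \<and> (\<forall>\<^sub>F n in sequentially.
               expected_loss Proj tv_loss n p (W ** W') > expected_loss Proj tv_loss n p W)"
proof (intro conjI allI impI)
  fix f :: "real \<Rightarrow> real"
  assume f: "convex_on {0..} f \<and> f 1 = 0 \<and> strictly_convex_at_one f"
  show "\<forall>\<^sub>F n in sequentially. expected_loss Proj (fdiv_loss f) n p (W ** W') > expected_loss Proj (fdiv_loss f) n p W"
  proof (rule general_thm[where h = "\<lambda>k x. p$k * f (x / p$k)"])
    show "\<forall>q. fdiv_loss f q p = (\<Sum>k\<in>UNIV. p$k * f (q$k / p$k))" by (simp add: fdiv_loss_def)
    show "\<forall>k. convex_on {0..} (\<lambda>x. p$k * f (x / p$k))"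
      using conv_fdiv f assms(3) by blast
    show "\<forall>k a b l. 0 \<le> a \<longrightarrow> a < p$k \<longrightarrow> p$k < b \<longrightarrow> 0 < l \<longrightarrow> l < 1 \<longrightarrow>
        p$k * f ((l*a + (1-l)*b) / p$k) < l * (p$k * f (a / p$k)) + (1-l) * (p$k * f (b / p$k))"
      using strict_fdiv f assms(3) by blast
  qed (use assms in auto)
next
  show "\<forall>\<^sub>F n in sequentially. expected_loss Proj mse_loss n p (W ** W') > expected_loss Proj mse_loss n p W"
  proof (rule general_thm[where h = "\<lambda>k x. (x - p$k)^2"])
    show "\<forall>q. mse_loss q p = (\<Sum>k\<in>UNIV. (q$k - p$k)^2)" by (simp add: mse_loss_def)
    show "\<forall>k. convex_on {0..} (\<lambda>x. (x - p$k)^2)" using conv_sq by blast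
    show "\<forall>k a b l. 0 \<le> a \<longrightarrow> a < p$k \<longrightarrow> p$k < b \<longrightarrow> 0 < l \<longrightarrow> l < 1 \<longrightarrow>
        (l*a + (1-l)*b - p$k)^2 < l * (a - p$k)^2 + (1-l) * (b - p$k)^2"
      using strict_sq by blast
  qed (use assms in auto)
next
  show "\<forall>\<^sub>F n in sequentially. expected_loss Proj tv_loss n p (W ** W') > expected_loss Proj tv_loss n p W"
  proof (rule general_thm[where h = "\<lambda>k x. \<bar>x - p$k\<bar>"])
    show "\<forall>q. tv_loss q p = (\<Sum>k\<in>UNIV. \<bar>q$k - p$k\<bar>)" by (simp add: tv_loss_def)
    show "\<forall>k. convex_on {0..} (\<lambda>x. \<bar>x - p$k\<bar>)" using conv_abs by blast
    show "\<forall>k a b l. 0 \<le> a \<longrightarrow> a < p$k \<longrightarrow> p$k < b \<longrightarrow> 0 < l \<longrightarrow> l < 1 \<longrightarrow>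
        \<bar>l*a + (1-l)*b - p$k\<bar> < l * \<bar>a - p$k\<bar> + (1-l) * \<bar>b - p$k\<bar>"
      using strict_abs by blast
  qed (use assms in auto)
qed


end
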